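(* Let $\underline{E}=(E_p)_{p\in\mathbb{P}}$ be a family with $E_p\subseteq\overline{\mathbb{Z}_p}$ for every prime $p$, and let $R=\textnormal{Int}_{\mathbb{Q}}(\underline{E},\overline{\widehat{\mathbb{Z}}})$. Let $P$ be a finite set of primes and let $S$ be the multiplicative subset of $\mathbb{Z}$ generated by $\mathbb{P}\setminus P$. Then $$S^{-1}R=\bigcap_{p\in P}\textnormal{Int}_{\mathbb{Q}}(E_p,\overline{\mathbb{Z}_p}).$$ In particular, for each prime $p$, $(\mathbb{Z}\setminus p\mathbb{Z})^{-1}R=\textnormal{Int}_{\mathbb{Q}}(E_p,\overline{\mathbb{Z}_p})$.
   Context: $\mathbb{P}$ is the set of prime numbers. For a prime $p$, $\mathbb{Z}_p$ is the ring of $p$-adic integers, $\overline{\mathbb{Q}_p}$ a fixed algebraic closure of $\mathbb{Q}_p$, $\overline{\mathbb{Z}_p}$ the integral closure of $\mathbb{Z}_p$ in $\overline{\mathbb{Q}_p}$, and $v_p$ the unique extension of the $p$-adic valuation to $\overline{\mathbb{Q}_p}$. For $E_p\subseteq\overline{\mathbb{Z}_p}$, $\textnormal{Int}_{\mathbb{Q}}(E_p,\overline{\mathbb{Z}_p})=\{f\in\mathbb{Q}[X]\mid f(\alpha)\in\overline{\mathbb{Z}_p}\ \forall\alpha\in E_p\}$ (this is $\mathbb{Q}[X]$ if $E_p=\emptyset$). For a family $\underline{E}=(E_p)_p$ (written $\prod_pE_p\subseteq\overline{\widehat{\mathbb{Z}}}=\prod_p\overline{\mathbb{Z}_p}$;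 components may be empty), $\textnormal{Int}_{\mathbb{Q}}(\underline{E},\overline{\widehat{\mathbb{Z}}})=\bigcap_{p\in\mathbb{P}}\textnormal{Int}_{\mathbb{Q}}(E_p,\overline{\mathbb{Z}_p})$, i.e. the polynomials $f\in\mathbb{Q}[X]$ with $f(\alpha_p)\in\overline{\mathbb{Z}_p}$ for all $p$ and all $\alpha_p\in E_p$. *)

theory Defs
  imports "HOL-Algebra.Algebraic_Closure" "HOL-Computational_Algebra.Computational_Algebra"
begin

definition rat_vp :: "nat \<Rightarrow> rat \<Rightarrow> int" where
  "rat_vp p q = (case quotient_of q of (a, b) \<Rightarrow>
      int (Factorial_Ring.multiplicity (int p) a) - int (Factorial_Ring.multiplicity (int p) b))"

definition padic_cauchy :: "nat \<Rightarrow> (nat \<Rightarrow> rat) \<Rightarrow> bool" where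
  "padic_cauchy p u \<longleftrightarrow>
     (\<forall>k::int. \<exists>N::nat. \<forall>m n. N \<le> m \<longrightarrow> N \<le> n \<longrightarrow> u m = u n \<or> k \<le> rat_vp p (u m - u n))"

definition padic_null :: "nat \<Rightarrow> (nat \<Rightarrow> rat) \<Rightarrow> bool" where
  "padic_null p u \<longleftrightarrow> (\<forall>k::int. \<exists>N::nat. \<forall>n. N \<le> n \<longrightarrow> u n = 0 \<or> k \<le> rat_vp p (u n))"

definition padic_rel :: "nat \<Rightarrow> ((nat \<Rightarrow> rat) \<times> (nat \<Rightarrow> rat)) set" where
  "padic_rel p = {(u, w). padic_cauchy p u \<and> padic_cauchy p w \<and> padic_null p (\<lambda>n. u n - w n)}"

definition padic_class :: "nat \<Rightarrow> (nat \<Rightarrow> rat) \<Rightarrow> (nat \<Rightarrow> rat) set" where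
  "padic_class p u = padic_rel p `` {u}"

definition Qp :: "nat \<Rightarrow> (nat \<Rightarrow> rat) set ring" where
  "Qp p = \<lparr> carrier = {u. padic_cauchy p u} // padic_rel p,
            monoid.mult = (\<lambda>A B. padic_class p (\<lambda>n. (SOME u. u \<in> A) n * (SOME w. w \<in> B) n)),
            one = padic_class p (\<lambda>_. 1),
            zero = padic_class p (\<lambda>_. 0),
            add = (\<lambda>A B. padic_class p (\<lambda>n. (SOME u. u \<in> A) n + (SOME w. w \<in> B) n)) \<rparr>"

text \<open>Z_p: the closure of Z in Q_p (classes with an integer-valued representative).\<close>
definition Zp :: "nat \<Rightarrow> (nat \<Rightarrow> rat) set set" where
  "Zp p = {A \<in> carrier (Qp p). \<exists>u\<in>A. \<forall>n. u n \<in> \<int>}"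

type_synonym qbar = "(((nat \<Rightarrow> rat) set list \<times> nat) multiset \<Rightarrow> (nat \<Rightarrow> rat) set)"

definition Qpbar :: "nat \<Rightarrow> qbar ring" where
  "Qpbar p = field.alg_closure (Qp p)"

definition emb :: "nat \<Rightarrow> (nat \<Rightarrow> rat) set \<Rightarrow> qbar" where
  "emb p = ring.indexed_const (Qp p)"

text \<open>Elements of the algebraic closure that are integral over Z_p (roots of a monic polynomial
  with coefficients in Z_p; polynomials are HOL-Algebra coefficient lists, leading coefficient first).\<close>
definition Zpbar :: "nat \<Rightarrow> qbar set" where
  "Zpbar p = {x \<in> carrier (Qpbar p). \<exists>q. q \<noteq> [] \<and> hd q = \<one>\<^bsub>Qpbar p\<^esub> \<and>
       set (tl q) \<subseteq> emb p ` Zp p \<and> ring.eval (Qpbar p) q x = \<zero>\<^bsub>Qpbar p\<^esub>}"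

definition rat_to_Qpbar :: "nat \<Rightarrow> rat \<Rightarrow> qbar" where
  "rat_to_Qpbar p r = emb p (padic_class p (\<lambda>_. r))"

definition qeval :: "nat \<Rightarrow> rat poly \<Rightarrow> qbar \<Rightarrow> qbar" where
  "qeval p f \<alpha> = finsum (Qpbar p)
      (\<lambda>i. rat_to_Qpbar p (coeff f i) \<otimes>\<^bsub>Qpbar p\<^esub> (\<alpha> [^]\<^bsub>Qpbar p\<^esub> i)) {..degree f}"

definition IntQ :: "nat \<Rightarrow> qbar set \<Rightarrow> rat poly set" where
  "IntQ p E = {f. \<forall>\<alpha>\<in>E. qeval p f \<alpha> \<in> Zpbar p}"

definition IntQ_family :: "(nat \<Rightarrow> qbar set) \<Rightarrow> rat poly set" where
  "IntQ_family E = {f. \<forall>p. prime p \<longrightarrow> f \<in> IntQ p (E p)}"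

inductive_set mult_gen :: "nat set \<Rightarrow> int set" for P :: "nat set" where
  one: "1 \<in> mult_gen P"
| step: "prime q \<Longrightarrow> q \<notin> P \<Longrightarrow> s \<in> mult_gen P \<Longrightarrow> int q * s \<in> mult_gen P"

definition loc :: "int set \<Rightarrow> rat poly set \<Rightarrow> rat poly set" where
  "loc S A = {smult (1 / of_int s) g | g s. g \<in> A \<and> s \<in> S}"

end

theory Submission
  imports Defs "Jordan_Normal_Form.Char_Poly"
begin


abbreviation mp :: "nat \<Rightarrow> int \<Rightarrow> int" where
  "mp p x \<equiv> int (multiplicity (int p) x)"

lemma prime_elem_intp: "prime (p::nat) \<Longrightarrow> prime_elem (int p)"
  by (simp add: prime_imp_prime_elem)

lemma mp_mult: "prime p \<Longrightarrow> x \<noteq> 0 \<Longrightarrow> y \<noteq> 0 \<Longrightarrow> mp p (x*y) = mp p x + mp p y"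
  using prime_elem_multiplicity_mult_distrib[OF prime_elem_intp] by simp

lemma rat_repr: fixes x :: rat obtains a b :: int where "b > 0" "x = of_int a / of_int b"
proof -
  obtain a b where q: "quotient_of x = (a, b)" by (cases "quotient_of x") auto
  thus thesis using that quotient_of_div[OF q] quotient_of_denom_pos[OF q] by blast
qed

lemma rat_vp_frac:
  assumes p: "prime p" and a: "a \<noteq> 0" and b: "b \<noteq> 0"
  shows "rat_vp p (of_int a / of_int b) = mp p a - mp p b"
proof -
  obtain a' b' where q: "quotient_of (of_int a / of_int b) = (a', b')" by (cases "quotient_of (of_int a / of_int b)") auto
  have b': "b' > 0" using quotient_of_denom_pos[OF q] .
  have e: "(of_int a / of_int b :: rat) = of_int a' / of_int b'" using quotient_of_div[OF q] .
  hence "of_int (a * b') = (of_int (a' * b) :: rat)" using b b' by (simp add: field_simps)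
  hence e2: "a * b' = a' * b" by (simp only: of_int_eq_iff)
  have a': "a' \<noteq> 0" using e2 a b' by auto
  have "mp p a + mp p b' = mp p a' + mp p b"
    using mp_mult[OF p a, of b'] mp_mult[OF p a' b] e2 b' by simp
  thus ?thesis unfolding rat_vp_def q by simp
qed

lemma rat_vp_int: "prime p \<Longrightarrow> a \<noteq> 0 \<Longrightarrow> rat_vp p (of_int a) = mp p a"
  using rat_vp_frac[of p a 1] by simp

lemma rat_vp_zero[simp]: "rat_vp p 0 = 0"
  by (simp add: rat_vp_def)

lemma rat_vp_one[simp]: "rat_vp p 1 = 0"
  by (simp add: rat_vp_def)

lemma rat_vp_mult:
  assumes p: "prime p" and x: "x \<noteq> 0" and y: "y \<noteq> 0"
  shows "rat_vp p (x*y) = rat_vp p x + rat_vp p y"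
proof -
  obtain a b where b: "b > 0" and xa: "x = of_int a / of_int b" by (rule rat_repr)
  obtain c d where d: "d > 0" and yc: "y = of_int c / of_int d" by (rule rat_repr)
  have a: "a \<noteq> 0" using x xa by auto
  have c: "c \<noteq> 0" using y yc by auto
  have "x * y = of_int (a*c) / of_int (b*d)" using xa yc by simp
  hence "rat_vp p (x*y) = rat_vp p (of_int (a*c) / of_int (b*d))" by (simp only:)
  also have "\<dots> = mp p (a*c) - mp p (b*d)" using rat_vp_frac[OF p, of "a*c" "b*d"] a c b d by simp
  also have "\<dots> = (mp p a - mp p b) + (mp p c - mp p d)"
    using mp_mult[OF p] a b c d by simp
  finally show ?thesis using rat_vp_frac[OF p] xa yc a b c d by simp
qed

lemma rat_vp_minus: "rat_vp p (-x) = rat_vp p x"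
proof -
  have "quotient_of (-x) = (case quotient_of x of (a, b) \<Rightarrow> (-a, b))"
    by (simp add: rat_uminus_code)
  thus ?thesis unfolding rat_vp_def by (auto split: prod.splits)
qed

lemma rat_vp_inverse:
  assumes p: "prime p" and x: "x \<noteq> 0"
  shows "rat_vp p (inverse x) = - rat_vp p x"
proof -
  have "rat_vp p (x * inverse x) = 0" using x by simp
  moreover have "rat_vp p (x * inverse x) = rat_vp p x + rat_vp p (inverse x)"
    using rat_vp_mult[OF p x, of "inverse x"] x by simp
  ultimately show ?thesis by linarith
qed

lemma rat_vp_add:
  assumes p: "prime p" and s: "x + y \<noteq> 0"
  shows "min (rat_vp p x) (rat_vp p y) \<le> rat_vp p (x + y)"
proof (cases "x = 0 \<or> y = 0")
  case True thus ?thesis by auto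
next
  case False
  hence x: "x \<noteq> 0" and y: "y \<noteq> 0" by auto
  obtain a b where b: "b > 0" and xa: "x = of_int a / of_int b" by (rule rat_repr)
  obtain c d where d: "d > 0" and yc: "y = of_int c / of_int d" by (rule rat_repr)
  have a: "a \<noteq> 0" using x xa by auto
  have c: "c \<noteq> 0" using y yc by auto
  have sum: "x + y = of_int (a*d + c*b) / of_int (b*d)" using xa yc b d by (simp add: field_simps)
  have n: "a*d + c*b \<noteq> 0" using s sum by (metis div_0 of_int_0)
  define m where "m = min (multiplicity (int p) (a*d)) (multiplicity (int p) (c*b))"
  have "int p ^ m dvd a*d" unfolding m_def by (meson min.cobounded1 multiplicity_dvd')
  moreover have "int p ^ m dvd c*b" unfolding m_def by (meson min.cobounded2 multiplicity_dvd')
  ultimately have "int p ^ m dvd a*d + c*b" by simp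
  hence m: "m \<le> multiplicity (int p) (a*d + c*b)"
  proof -
    have "prime (int p)" using p by simp
    hence "\<not> is_unit (int p)" using not_prime_unit by blast
    thus ?thesis using multiplicity_geI[OF n] \<open>int p ^ m dvd a*d + c*b\<close> by blast
  qed
  have "rat_vp p (x+y) = rat_vp p (of_int (a*d + c*b) / of_int (b*d))" using sum by (simp only:)
  also have "\<dots> = mp p (a*d + c*b) - mp p (b*d)" using rat_vp_frac[OF p n, of "b*d"] b d by simp
  finally have e1: "rat_vp p (x+y) = mp p (a*d + c*b) - mp p (b*d)" .
  have e2: "rat_vp p x = mp p a - mp p b" unfolding xa by (rule rat_vp_frac[OF p a]) (use b in simp)
  have e3: "rat_vp p y = mp p c - mp p d" unfolding yc by (rule rat_vp_frac[OF p c]) (use d in simp)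
  have e4: "mp p (a*d) = mp p a + mp p d" "mp p (c*b) = mp p c + mp p b" "mp p (b*d) = mp p b + mp p d"
    using mp_mult[OF p] a b c d by auto
  have m': "min (mp p (a*d)) (mp p (c*b)) \<le> mp p (a*d + c*b)" using m unfolding m_def by linarith
  have aux: "\<And>A B C D N::int. min (A+D) (C+B) \<le> N \<Longrightarrow> min (A - B) (C - D) \<le> N - (B + D)"
    by linarith
  show ?thesis unfolding e1 e2 e3 e4(3) using m' unfolding e4(1,2) by (rule aux)
qed



definition sm :: "nat \<Rightarrow> int \<Rightarrow> rat \<Rightarrow> bool" where
  "sm p k x \<longleftrightarrow> x = 0 \<or> k \<le> rat_vp p x"

lemma cauchy_sm: "padic_cauchy p u \<longleftrightarrow> (\<forall>k. \<exists>N. \<forall>m n. N \<le> m \<longrightarrow> N \<le> n \<longrightarrow> sm p k (u m - u n))"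
  unfolding padic_cauchy_def sm_def by simp

lemma null_sm: "padic_null p u \<longleftrightarrow> (\<forall>k. \<exists>N. \<forall>n. N \<le> n \<longrightarrow> sm p k (u n))"
  unfolding padic_null_def sm_def by simp

lemma sm_zero[simp]: "sm p k 0" by (simp add: sm_def)

lemma sm_minus[simp]: "sm p k (-x) \<longleftrightarrow> sm p k x"
  by (simp add: sm_def rat_vp_minus)

lemma sm_mono: "j \<le> k \<Longrightarrow> sm p k x \<Longrightarrow> sm p j x"
  by (auto simp: sm_def)

lemma sm_self: "sm p (rat_vp p x) x"
  by (simp add: sm_def)

context fixes p :: nat assumes p: "prime p"
begin

lemma sm_add: assumes "sm p k x" "sm p k y" shows "sm p k (x + y)"
proof (cases "x + y = 0")
  case True thus ?thesis by simp
next
  case False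
  note m = rat_vp_add[OF p False]
  show ?thesis
  proof (cases "x = 0")
    case True thus ?thesis using assms by simp
  next
    case x: False
    show ?thesis
    proof (cases "y = 0")
      case True thus ?thesis using assms by simp
    next
      case y: False
      have "k \<le> rat_vp p x" "k \<le> rat_vp p y" using assms x y by (auto simp: sm_def)
      hence "k \<le> rat_vp p (x + y)" using m by linarith
      thus ?thesis by (simp add: sm_def)
    qed
  qed
qed

lemma sm_diff: "sm p k x \<Longrightarrow> sm p k y \<Longrightarrow> sm p k (x - y)"
  using sm_add[of k x "-y"] by simp

lemma sm_mult: assumes "sm p k x" "sm p j y" shows "sm p (k + j) (x * y)"
proof (cases "x = 0 \<or> y = 0")
  case True thus ?thesis by auto
next
  case False
  hence "k \<le> rat_vp p x" "j \<le> rat_vp p y" using assms by (auto simp: sm_def)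
  thus ?thesis using rat_vp_mult[OF p] False by (simp add: sm_def)
qed

lemma sm_strict:
  assumes "x \<noteq> 0" "sm p k y" "rat_vp p x < k"
  shows "x + y \<noteq> 0 \<and> rat_vp p (x + y) = rat_vp p x"
proof (cases "y = 0")
  case True thus ?thesis using assms by simp
next
  case y: False
  have ky: "k \<le> rat_vp p y" using assms y by (simp add: sm_def)
  have s: "x + y \<noteq> 0"
  proof
    assume "x + y = 0" hence "y = -x" by simp
    thus False using ky assms rat_vp_minus[of p x] by simp
  qed
  have "min (rat_vp p x) (rat_vp p y) \<le> rat_vp p (x + y)" using rat_vp_add[OF p s] .
  hence ge: "rat_vp p x \<le> rat_vp p (x + y)" using ky assms by simp
  have "rat_vp p (x + y) \<le> rat_vp p x"
  proof (rule ccontr)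
    assume a: "\<not> ?thesis"
    have "x = (x + y) + (-y)" by simp
    moreover have "x + y + - y \<noteq> 0" using assms by simp
    ultimately have "min (rat_vp p (x+y)) (rat_vp p (-y)) \<le> rat_vp p x"
      using rat_vp_add[OF p, of "x+y" "-y"] by simp
    thus False using a ky assms rat_vp_minus[of p y] by simp
  qed
  thus ?thesis using ge s by simp
qed

lemma null_add: "padic_null p u \<Longrightarrow> padic_null p w \<Longrightarrow> padic_null p (\<lambda>n. u n + w n)"
  unfolding null_sm
proof
  fix k assume u: "\<forall>k. \<exists>N. \<forall>n\<ge>N. sm p k (u n)" and w: "\<forall>k. \<exists>N. \<forall>n\<ge>N. sm p k (w n)"
  obtain N1 where N1: "\<forall>n\<ge>N1. sm p k (u n)" using u by blast
  obtain N2 where N2: "\<forall>n\<ge>N2. sm p k (w n)" using w by blast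
  show "\<exists>N. \<forall>n\<ge>N. sm p k (u n + w n)"
    by (rule exI[of _ "max N1 N2"]) (auto intro: sm_add N1[rule_format] N2[rule_format])
qed

lemma null_minus: "padic_null p u \<Longrightarrow> padic_null p (\<lambda>n. - u n)"
  unfolding null_sm by simp

lemma null_diff: "padic_null p u \<Longrightarrow> padic_null p w \<Longrightarrow> padic_null p (\<lambda>n. u n - w n)"
  using null_add[of u "\<lambda>n. - w n"] null_minus[of w] by simp

lemma null_zero: "padic_null p (\<lambda>n. 0)"
  unfolding null_sm by simp

lemma null_eventually_zero: assumes "\<exists>N. \<forall>n\<ge>N. u n = 0" shows "padic_null p u"
proof -
  obtain N where "\<forall>n\<ge>N. u n = 0" using assms by blast
  thus ?thesis unfolding null_sm by (metis sm_zero)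
qed

lemma cauchy_const: "padic_cauchy p (\<lambda>n. c)"
  unfolding cauchy_sm by simp

lemma cauchy_add: "padic_cauchy p u \<Longrightarrow> padic_cauchy p w \<Longrightarrow> padic_cauchy p (\<lambda>n. u n + w n)"
  unfolding cauchy_sm
proof
  fix k assume u: "\<forall>k. \<exists>N. \<forall>m n. N \<le> m \<longrightarrow> N \<le> n \<longrightarrow> sm p k (u m - u n)"
    and w: "\<forall>k. \<exists>N. \<forall>m n. N \<le> m \<longrightarrow> N \<le> n \<longrightarrow> sm p k (w m - w n)"
  obtain N1 where N1: "\<forall>m n. N1 \<le> m \<longrightarrow> N1 \<le> n \<longrightarrow> sm p k (u m - u n)" using u by blast
  obtain N2 where N2: "\<forall>m n. N2 \<le> m \<longrightarrow> N2 \<le> n \<longrightarrow> sm p k (w m - w n)" using w by blast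
  have "\<forall>m n. max N1 N2 \<le> m \<longrightarrow> max N1 N2 \<le> n \<longrightarrow> sm p k (u m + w m - (u n + w n))"
  proof (intro allI impI)
    fix m n assume "max N1 N2 \<le> m" "max N1 N2 \<le> n"
    hence "sm p k ((u m - u n) + (w m - w n))" using N1 N2 by (intro sm_add) auto
    thus "sm p k (u m + w m - (u n + w n))" by (simp add: algebra_simps)
  qed
  thus "\<exists>N. \<forall>m n. N \<le> m \<longrightarrow> N \<le> n \<longrightarrow> sm p k (u m + w m - (u n + w n))" by blast
qed

lemma cauchy_minus: "padic_cauchy p u \<Longrightarrow> padic_cauchy p (\<lambda>n. - u n)"
  unfolding cauchy_sm
proof
  fix k assume u: "\<forall>k. \<exists>N. \<forall>m n. N \<le> m \<longrightarrow> N \<le> n \<longrightarrow> sm p k (u m - u n)"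
  obtain N1 where N1: "\<forall>m n. N1 \<le> m \<longrightarrow> N1 \<le> n \<longrightarrow> sm p k (u m - u n)" using u by blast
  have "\<forall>m n. N1 \<le> m \<longrightarrow> N1 \<le> n \<longrightarrow> sm p k (- u m - - u n)"
  proof (intro allI impI)
    fix m n assume "N1 \<le> m" "N1 \<le> n"
    hence "sm p k (- (u m - u n))" using N1 by simp
    thus "sm p k (- u m - - u n)" by simp
  qed
  thus "\<exists>N. \<forall>m n. N \<le> m \<longrightarrow> N \<le> n \<longrightarrow> sm p k (- u m - - u n)" by blast
qed

lemma null_imp_cauchy: "padic_null p u \<Longrightarrow> padic_cauchy p u"
  unfolding cauchy_sm null_sm
proof
  fix k assume u: "\<forall>k. \<exists>N. \<forall>n\<ge>N. sm p k (u n)"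
  obtain N where N: "\<forall>n\<ge>N. sm p k (u n)" using u by blast
  show "\<exists>N. \<forall>m n. N \<le> m \<longrightarrow> N \<le> n \<longrightarrow> sm p k (u m - u n)"
    by (rule exI[of _ N]) (auto intro: sm_diff N[rule_format])
qed

lemma cauchy_bounded:
  assumes "padic_cauchy p u"
  obtains B where "B \<le> 0" "\<And>n. sm p B (u n)"
proof -
  obtain N where N: "\<forall>m n. N \<le> m \<longrightarrow> N \<le> n \<longrightarrow> sm p 0 (u m - u n)"
    using assms unfolding cauchy_sm by blast
  define B where "B = Min (insert 0 ((\<lambda>n. rat_vp p (u n)) ` {..N}))"
  have B0: "B \<le> 0" unfolding B_def by simp
  have Bn: "B \<le> rat_vp p (u n)" if "n \<le> N" for n
    unfolding B_def using that by (intro Min_le) auto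
  have "sm p B (u n)" for n
  proof (cases "n \<le> N")
    case True thus ?thesis using Bn[OF True] by (simp add: sm_def)
  next
    case False
    have "sm p 0 (u n - u N)" using N False by simp
    hence a: "sm p B (u n - u N)" using B0 sm_mono by blast
    have b: "sm p B (u N)" using Bn[of N] by (simp add: sm_def)
    have "sm p B ((u n - u N) + u N)" using sm_add[OF a b] .
    thus ?thesis by simp
  qed
  thus thesis using that B0 by blast
qed

lemma null_mult_bounded:
  assumes "padic_null p u" "\<And>n. sm p B (w n)"
  shows "padic_null p (\<lambda>n. u n * w n)"
  unfolding null_sm
proof
  fix k
  obtain N where N: "\<forall>n\<ge>N. sm p (k - B) (u n)" using assms(1) unfolding null_sm by blast
  have "\<forall>n\<ge>N. sm p k (u n * w n)"
  proof (intro allI impI)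
    fix n assume "N \<le> n"
    hence "sm p ((k - B) + B) (u n * w n)" using N assms(2) by (intro sm_mult) auto
    thus "sm p k (u n * w n)" by simp
  qed
  thus "\<exists>N. \<forall>n\<ge>N. sm p k (u n * w n)" by blast
qed

lemma cauchy_mult:
  assumes u: "padic_cauchy p u" and w: "padic_cauchy p w"
  shows "padic_cauchy p (\<lambda>n. u n * w n)"
  unfolding cauchy_sm
proof
  fix k
  obtain B1 where B1: "B1 \<le> 0" "\<And>n. sm p B1 (u n)" using cauchy_bounded[OF u] by blast
  obtain B2 where B2: "B2 \<le> 0" "\<And>n. sm p B2 (w n)" using cauchy_bounded[OF w] by blast
  obtain N1 where N1: "\<forall>m n. N1 \<le> m \<longrightarrow> N1 \<le> n \<longrightarrow> sm p (k - B2) (u m - u n)"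
    using u unfolding cauchy_sm by blast
  obtain N2 where N2: "\<forall>m n. N2 \<le> m \<longrightarrow> N2 \<le> n \<longrightarrow> sm p (k - B1) (w m - w n)"
    using w unfolding cauchy_sm by blast
  have "\<forall>m n. max N1 N2 \<le> m \<longrightarrow> max N1 N2 \<le> n \<longrightarrow> sm p k (u m * w m - u n * w n)"
  proof (intro allI impI)
    fix m n assume mn: "max N1 N2 \<le> m" "max N1 N2 \<le> n"
    have a: "sm p (B1 + (k - B1)) (u m * (w m - w n))" using B1 N2 mn by (intro sm_mult) auto
    have b: "sm p ((k - B2) + B2) ((u m - u n) * w n)" using B2 N1 mn by (intro sm_mult) auto
    have "sm p k (u m * (w m - w n) + (u m - u n) * w n)" using a b by (intro sm_add) auto
    thus "sm p k (u m * w m - u n * w n)" by (simp add: algebra_simps)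
  qed
  thus "\<exists>N. \<forall>m n. N \<le> m \<longrightarrow> N \<le> n \<longrightarrow> sm p k (u m * w m - u n * w n)" by blast
qed

lemma cauchy_null_eventually:
  assumes u: "padic_cauchy p u" and nn: "\<not> padic_null p u"
  obtains k N where "\<forall>n\<ge>N. u n \<noteq> 0 \<and> rat_vp p (u n) = k"
proof -
  obtain K where K: "\<forall>N. \<exists>n\<ge>N. \<not> sm p K (u n)" using nn unfolding null_sm by blast
  obtain N where N: "\<forall>m n. N \<le> m \<longrightarrow> N \<le> n \<longrightarrow> sm p K (u m - u n)"
    using u unfolding cauchy_sm by blast
  obtain n0 where n0: "n0 \<ge> N" "\<not> sm p K (u n0)" using K by blast
  have u0: "u n0 \<noteq> 0" "rat_vp p (u n0) < K" using n0 by (auto simp: sm_def)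
  have "\<forall>n\<ge>N. u n \<noteq> 0 \<and> rat_vp p (u n) = rat_vp p (u n0)"
  proof (intro allI impI)
    fix n assume "N \<le> n"
    hence "sm p K (u n - u n0)" using N n0 by blast
    from sm_strict[OF u0(1) this u0(2)] show "u n \<noteq> 0 \<and> rat_vp p (u n) = rat_vp p (u n0)" by simp
  qed
  thus thesis using that by blast
qed

lemma cauchy_inverse:
  assumes u: "padic_cauchy p u" and nn: "\<not> padic_null p u"
  shows "padic_cauchy p (\<lambda>n. inverse (u n))"
    and "padic_null p (\<lambda>n. u n * inverse (u n) - 1)"
proof -
  obtain k N where kN: "\<forall>n\<ge>N. u n \<noteq> 0 \<and> rat_vp p (u n) = k"
    using cauchy_null_eventually[OF u nn] by blast
  show "padic_null p (\<lambda>n. u n * inverse (u n) - 1)"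
  proof (rule null_eventually_zero)
    show "\<exists>N. \<forall>n\<ge>N. u n * inverse (u n) - 1 = 0" using kN by (intro exI[of _ N]) auto
  qed
  show "padic_cauchy p (\<lambda>n. inverse (u n))"
    unfolding cauchy_sm
  proof
    fix j
    obtain N1 where N1: "\<forall>m n. N1 \<le> m \<longrightarrow> N1 \<le> n \<longrightarrow> sm p (j + 2*k) (u n - u m)"
      using u unfolding cauchy_sm by blast
    have "\<forall>m n. max N N1 \<le> m \<longrightarrow> max N N1 \<le> n \<longrightarrow> sm p j (inverse (u m) - inverse (u n))"
    proof (intro allI impI)
      fix m n assume mn: "max N N1 \<le> m" "max N N1 \<le> n"
      have um: "u m \<noteq> 0" "rat_vp p (u m) = k" and un: "u n \<noteq> 0" "rat_vp p (u n) = k"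
        using kN mn by auto
      have e: "inverse (u m) - inverse (u n) = (u n - u m) * (inverse (u m) * inverse (u n))"
        using um un by (simp add: field_simps)
      have i: "sm p (-k + -k) (inverse (u m) * inverse (u n))"
        apply (rule sm_mult) using um un rat_vp_inverse[OF p] by (auto simp: sm_def)
      have "sm p ((j + 2*k) + (-k + -k)) ((u n - u m) * (inverse (u m) * inverse (u n)))"
      proof -
        have a: "sm p (j + 2*k) (u n - u m)" using N1 mn by auto
        show ?thesis using sm_mult[OF a i] .
      qed
      thus "sm p j (inverse (u m) - inverse (u n))" unfolding e by simp
    qed
    thus "\<exists>N. \<forall>m n. N \<le> m \<longrightarrow> N \<le> n \<longrightarrow> sm p j (inverse (u m) - inverse (u n))" by blast
  qed
qed

lemma one_not_null: "\<not> padic_null p (\<lambda>n. 1)"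
  unfolding null_sm sm_def by (auto intro: exI[of _ 1])

end


lemma Qp_simps:
  "carrier (Qp p) = {u. padic_cauchy p u} // padic_rel p"
  "\<one>\<^bsub>Qp p\<^esub> = padic_class p (\<lambda>_. 1)"
  "\<zero>\<^bsub>Qp p\<^esub> = padic_class p (\<lambda>_. 0)"
  "A \<otimes>\<^bsub>Qp p\<^esub> B = padic_class p (\<lambda>n. (SOME u. u \<in> A) n * (SOME w. w \<in> B) n)"
  "A \<oplus>\<^bsub>Qp p\<^esub> B = padic_class p (\<lambda>n. (SOME u. u \<in> A) n + (SOME w. w \<in> B) n)"
  by (simp_all add: Qp_def)

context fixes p :: nat assumes p: "prime p"
begin

lemma rel_iff: "(u, w) \<in> padic_rel p \<longleftrightarrow> padic_cauchy p u \<and> padic_cauchy p w \<and> padic_null p (\<lambda>n. u n - w n)"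
  by (simp add: padic_rel_def)

lemma padic_equiv: "equiv {u. padic_cauchy p u} (padic_rel p)"
proof (rule equivI)
  show "refl_on {u. padic_cauchy p u} (padic_rel p)"
    by (rule refl_onI) (auto simp: rel_iff null_zero[OF p])
  show "sym (padic_rel p)"
  proof (rule symI)
    fix u w assume "(u, w) \<in> padic_rel p"
    hence "padic_cauchy p u" "padic_cauchy p w" "padic_null p (\<lambda>n. u n - w n)"
      by (auto simp: rel_iff)
    moreover have "(\<lambda>n. - (u n - w n)) = (\<lambda>n. w n - u n)" by auto
    ultimately have "padic_cauchy p u" "padic_cauchy p w" "padic_null p (\<lambda>n. w n - u n)"
      using null_minus[OF p, of "\<lambda>n. u n - w n"] by auto
    thus "(w, u) \<in> padic_rel p" by (simp add: rel_iff)
  qed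
  show "trans (padic_rel p)"
  proof (rule transI)
    fix u w z assume "(u, w) \<in> padic_rel p" "(w, z) \<in> padic_rel p"
    hence "padic_cauchy p u" "padic_cauchy p z" "padic_null p (\<lambda>n. (u n - w n) + (w n - z n))"
      using null_add[OF p, of "\<lambda>n. u n - w n" "\<lambda>n. w n - z n"] by (auto simp: rel_iff)
    moreover have "(\<lambda>n. (u n - w n) + (w n - z n)) = (\<lambda>n. u n - z n)" by auto
    ultimately show "(u, z) \<in> padic_rel p" by (simp add: rel_iff)
  qed
qed (auto simp: rel_iff)

lemma cls_eq: "padic_cauchy p u \<Longrightarrow> padic_cauchy p w \<Longrightarrow>
   padic_class p u = padic_class p w \<longleftrightarrow> padic_null p (\<lambda>n. u n - w n)"
  unfolding padic_class_def using equiv_class_eq_iff[OF padic_equiv, of u w] by (simp add: rel_iff)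

lemma cls_in: "padic_cauchy p u \<Longrightarrow> padic_class p u \<in> carrier (Qp p)"
  unfolding Qp_simps padic_class_def by (rule quotientI) simp

lemma carrier_cases: assumes "A \<in> carrier (Qp p)"
  obtains u where "padic_cauchy p u" "A = padic_class p u"
  using assms unfolding Qp_simps padic_class_def by (auto elim!: quotientE)

lemma mem_cls: "w \<in> padic_class p u \<longleftrightarrow> (u, w) \<in> padic_rel p"
  unfolding padic_class_def by simp

lemma rep_cls: assumes "padic_cauchy p u"
  shows "padic_cauchy p (SOME w. w \<in> padic_class p u)"
    and "padic_null p (\<lambda>n. (SOME w. w \<in> padic_class p u) n - u n)"
proof -
  have "u \<in> padic_class p u" using assms by (simp add: mem_cls rel_iff null_zero[OF p])
  hence "(SOME w. w \<in> padic_class p u) \<in> padic_class p u"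
    using someI[where P="\<lambda>w. w \<in> padic_class p u"] by blast
  hence r: "(u, SOME w. w \<in> padic_class p u) \<in> padic_rel p" by (simp add: mem_cls)
  thus "padic_cauchy p (SOME w. w \<in> padic_class p u)" by (simp add: rel_iff)
  have "(SOME w. w \<in> padic_class p u, u) \<in> padic_rel p"
    using r padic_equiv by (meson equivE symD)
  thus "padic_null p (\<lambda>n. (SOME w. w \<in> padic_class p u) n - u n)" by (simp add: rel_iff)
qed

lemma add_cls: assumes u: "padic_cauchy p u" and w: "padic_cauchy p w"
  shows "padic_class p u \<oplus>\<^bsub>Qp p\<^esub> padic_class p w = padic_class p (\<lambda>n. u n + w n)"
proof -
  define a where "a = (SOME x. x \<in> padic_class p u)"
  define b where "b = (SOME x. x \<in> padic_class p w)"
  have a: "padic_cauchy p a" "padic_null p (\<lambda>n. a n - u n)" using rep_cls[OF u] unfolding a_def by auto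
  have b: "padic_cauchy p b" "padic_null p (\<lambda>n. b n - w n)" using rep_cls[OF w] unfolding b_def by auto
  have "padic_null p (\<lambda>n. (a n - u n) + (b n - w n))" using null_add[OF p a(2) b(2)] .
  hence "padic_null p (\<lambda>n. (a n + b n) - (u n + w n))" by (simp add: algebra_simps)
  hence "padic_class p (\<lambda>n. a n + b n) = padic_class p (\<lambda>n. u n + w n)"
    using cls_eq cauchy_add[OF p] a b u w by simp
  thus ?thesis unfolding Qp_simps a_def b_def .
qed

lemma mult_cls: assumes u: "padic_cauchy p u" and w: "padic_cauchy p w"
  shows "padic_class p u \<otimes>\<^bsub>Qp p\<^esub> padic_class p w = padic_class p (\<lambda>n. u n * w n)"
proof -
  define a where "a = (SOME x. x \<in> padic_class p u)"
  define b where "b = (SOME x. x \<in> padic_class p w)"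
  have a: "padic_cauchy p a" "padic_null p (\<lambda>n. a n - u n)" using rep_cls[OF u] unfolding a_def by auto
  have b: "padic_cauchy p b" "padic_null p (\<lambda>n. b n - w n)" using rep_cls[OF w] unfolding b_def by auto
  obtain B1 where B1: "\<And>n. sm p B1 (a n)" using cauchy_bounded[OF p a(1)] by blast
  obtain B2 where B2: "\<And>n. sm p B2 (w n)" using cauchy_bounded[OF p w] by blast
  have "padic_null p (\<lambda>n. (b n - w n) * a n + (a n - u n) * w n)"
    using null_add[OF p null_mult_bounded[OF p b(2) B1] null_mult_bounded[OF p a(2) B2]] .
  hence "padic_null p (\<lambda>n. (a n * b n) - (u n * w n))" by (simp add: algebra_simps)
  hence "padic_class p (\<lambda>n. a n * b n) = padic_class p (\<lambda>n. u n * w n)"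
    using cls_eq cauchy_mult[OF p] a b u w by simp
  thus ?thesis unfolding Qp_simps a_def b_def .
qed

lemma Qp_abelian_group: "abelian_group (Qp p)"
proof (rule abelian_groupI)
  fix x y assume "x \<in> carrier (Qp p)" "y \<in> carrier (Qp p)"
  then obtain u w where "padic_cauchy p u" "x = padic_class p u" "padic_cauchy p w" "y = padic_class p w"
    by (metis carrier_cases)
  thus "x \<oplus>\<^bsub>Qp p\<^esub> y \<in> carrier (Qp p)" by (simp add: add_cls cls_in cauchy_add[OF p])
next
  show "\<zero>\<^bsub>Qp p\<^esub> \<in> carrier (Qp p)" unfolding Qp_simps(3) by (rule cls_in) (rule cauchy_const[OF p])
next
  fix x y z assume "x \<in> carrier (Qp p)" "y \<in> carrier (Qp p)" "z \<in> carrier (Qp p)"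
  then obtain u w v where "padic_cauchy p u" "x = padic_class p u" "padic_cauchy p w" "y = padic_class p w"
     "padic_cauchy p v" "z = padic_class p v"
    by (metis carrier_cases)
  thus "x \<oplus>\<^bsub>Qp p\<^esub> y \<oplus>\<^bsub>Qp p\<^esub> z = x \<oplus>\<^bsub>Qp p\<^esub> (y \<oplus>\<^bsub>Qp p\<^esub> z)"
    by (simp add: add_cls cauchy_add[OF p] add.assoc)
next
  fix x y assume "x \<in> carrier (Qp p)" "y \<in> carrier (Qp p)"
  then obtain u w where "padic_cauchy p u" "x = padic_class p u" "padic_cauchy p w" "y = padic_class p w"
    by (metis carrier_cases)
  thus "x \<oplus>\<^bsub>Qp p\<^esub> y = y \<oplus>\<^bsub>Qp p\<^esub> x" by (simp add: add_cls add.commute)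
next
  fix x assume "x \<in> carrier (Qp p)"
  then obtain u where "padic_cauchy p u" "x = padic_class p u" by (metis carrier_cases)
  thus "\<zero>\<^bsub>Qp p\<^esub> \<oplus>\<^bsub>Qp p\<^esub> x = x" by (simp add: Qp_simps(3) add_cls cauchy_const[OF p])
next
  fix x assume "x \<in> carrier (Qp p)"
  then obtain u where u: "padic_cauchy p u" "x = padic_class p u" by (metis carrier_cases)
  have "padic_class p (\<lambda>n. - u n) \<oplus>\<^bsub>Qp p\<^esub> x = \<zero>\<^bsub>Qp p\<^esub>"
    using u by (simp add: Qp_simps(3) add_cls cauchy_minus[OF p])
  moreover have "padic_class p (\<lambda>n. - u n) \<in> carrier (Qp p)" using u by (simp add: cls_in cauchy_minus[OF p])
  ultimately show "\<exists>y\<in>carrier (Qp p). y \<oplus>\<^bsub>Qp p\<^esub> x = \<zero>\<^bsub>Qp p\<^esub>" by blast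
qed

lemma Qp_comm_monoid: "comm_monoid (Qp p)"
proof (rule comm_monoidI)
  fix x y assume "x \<in> carrier (Qp p)" "y \<in> carrier (Qp p)"
  then obtain u w where "padic_cauchy p u" "x = padic_class p u" "padic_cauchy p w" "y = padic_class p w"
    by (metis carrier_cases)
  thus "x \<otimes>\<^bsub>Qp p\<^esub> y \<in> carrier (Qp p)" by (simp add: mult_cls cls_in cauchy_mult[OF p])
next
  show "\<one>\<^bsub>Qp p\<^esub> \<in> carrier (Qp p)" unfolding Qp_simps(2) by (rule cls_in) (rule cauchy_const[OF p])
next
  fix x y z assume "x \<in> carrier (Qp p)" "y \<in> carrier (Qp p)" "z \<in> carrier (Qp p)"
  then obtain u w v where "padic_cauchy p u" "x = padic_class p u" "padic_cauchy p w" "y = padic_class p w"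
     "padic_cauchy p v" "z = padic_class p v"
    by (metis carrier_cases)
  thus "x \<otimes>\<^bsub>Qp p\<^esub> y \<otimes>\<^bsub>Qp p\<^esub> z = x \<otimes>\<^bsub>Qp p\<^esub> (y \<otimes>\<^bsub>Qp p\<^esub> z)"
    by (simp add: mult_cls cauchy_mult[OF p] mult.assoc)
next
  fix x assume "x \<in> carrier (Qp p)"
  then obtain u where "padic_cauchy p u" "x = padic_class p u" by (metis carrier_cases)
  thus "\<one>\<^bsub>Qp p\<^esub> \<otimes>\<^bsub>Qp p\<^esub> x = x" by (simp add: Qp_simps(2) mult_cls cauchy_const[OF p])
next
  fix x y assume "x \<in> carrier (Qp p)" "y \<in> carrier (Qp p)"
  then obtain u w where "padic_cauchy p u" "x = padic_class p u" "padic_cauchy p w" "y = padic_class p w"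
    by (metis carrier_cases)
  thus "x \<otimes>\<^bsub>Qp p\<^esub> y = y \<otimes>\<^bsub>Qp p\<^esub> x" by (simp add: mult_cls mult.commute)
qed

lemma Qp_cring: "cring (Qp p)"
proof (rule cringI[OF Qp_abelian_group Qp_comm_monoid])
  fix x y z assume "x \<in> carrier (Qp p)" "y \<in> carrier (Qp p)" "z \<in> carrier (Qp p)"
  then obtain u w v where "padic_cauchy p u" "x = padic_class p u" "padic_cauchy p w" "y = padic_class p w"
     "padic_cauchy p v" "z = padic_class p v"
    by (metis carrier_cases)
  thus "(x \<oplus>\<^bsub>Qp p\<^esub> y) \<otimes>\<^bsub>Qp p\<^esub> z = x \<otimes>\<^bsub>Qp p\<^esub> z \<oplus>\<^bsub>Qp p\<^esub> y \<otimes>\<^bsub>Qp p\<^esub> z"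
    by (simp add: mult_cls add_cls cauchy_mult[OF p] cauchy_add[OF p] distrib_right)
qed

lemma Qp_field: "field (Qp p)"
proof (rule cring.cring_fieldI2[OF Qp_cring])
  have "\<not> padic_null p (\<lambda>n. 0 - 1)"
    using one_not_null[OF p] null_minus[OF p, of "\<lambda>n. 0 - 1"] by auto
  thus "\<zero>\<^bsub>Qp p\<^esub> \<noteq> \<one>\<^bsub>Qp p\<^esub>" unfolding Qp_simps(2,3) using cls_eq cauchy_const[OF p] by blast
next
  fix a assume a: "a \<in> carrier (Qp p)" "a \<noteq> \<zero>\<^bsub>Qp p\<^esub>"
  then obtain u where u: "padic_cauchy p u" "a = padic_class p u" by (metis carrier_cases)
  have nn: "\<not> padic_null p u"
    using a u cls_eq[OF u(1) cauchy_const[OF p, of 0]] unfolding Qp_simps(3) by auto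
  note iu = cauchy_inverse[OF p u(1) nn]
  have "a \<otimes>\<^bsub>Qp p\<^esub> padic_class p (\<lambda>n. inverse (u n)) = padic_class p (\<lambda>n. u n * inverse (u n))"
    using u iu by (simp add: mult_cls)
  also have "\<dots> = \<one>\<^bsub>Qp p\<^esub>" unfolding Qp_simps(2)
    using cls_eq[OF cauchy_mult[OF p u(1) iu(1)] cauchy_const[OF p]] iu(2) by simp
  finally show "\<exists>b\<in>carrier (Qp p). a \<otimes>\<^bsub>Qp p\<^esub> b = \<one>\<^bsub>Qp p\<^esub>" using cls_in[OF iu(1)] by blast
qed

end


lemma det_trick:
  fixes y :: "'a::comm_ring_1" and v :: "nat \<Rightarrow> 'a" and m :: "nat \<Rightarrow> nat \<Rightarrow> 'a"
  assumes eq: "\<And>i. i < n \<Longrightarrow> y * v i = (\<Sum>j<n. m i j * v j)" and k: "k < n"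
  shows "poly (char_poly (mat n n (\<lambda>(i,j). m i j))) y * v k = 0"
proof -
  define M where "M = mat n n (\<lambda>(i,j). m i j)"
  have M: "M \<in> carrier_mat n n" unfolding M_def by simp
  define B where "B = map_mat (\<lambda>q. poly q y) (char_poly_matrix M)"
  have B: "B \<in> carrier_mat n n" unfolding B_def using M by simp
  have ph: "comm_ring_hom (\<lambda>q. poly q y)" by unfold_locales auto
  have detB: "det B = poly (char_poly M) y" unfolding B_def char_poly_def
    by (rule Determinant.comm_ring_hom.hom_det[OF ph])
  have Bij: "B $$ (i,j) = (if i = j then y else 0) - m i j" if "i < n" "j < n" for i j
    using that M unfolding B_def char_poly_matrix_def M_def by simp
  define vv where "vv = vec n v"
  have vv: "vv \<in> carrier_vec n" unfolding vv_def by simp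
  have Bv: "B *\<^sub>v vv = 0\<^sub>v n"
  proof (rule eq_vecI)
    show "dim_vec (B *\<^sub>v vv) = dim_vec (0\<^sub>v n :: 'a vec)" using B by simp
    fix i assume "i < dim_vec (0\<^sub>v n :: 'a vec)"
    hence i: "i < n" by simp
    have "(B *\<^sub>v vv) $ i = (\<Sum>j<n. B $$ (i,j) * v j)"
      using B i unfolding vv_def mult_mat_vec_def scalar_prod_def
      by (simp add: atLeast0LessThan)
    also have "\<dots> = (\<Sum>j<n. (if i = j then y else 0) * v j - m i j * v j)"
    proof (intro sum.cong refl)
      fix j assume "j \<in> {..<n}"
      thus "B $$ (i,j) * v j = (if i = j then y else 0) * v j - m i j * v j"
        using Bij[OF i, of j] by (simp add: left_diff_distrib)
    qed
    also have "\<dots> = (\<Sum>j<n. (if i = j then y else 0) * v j) - (\<Sum>j<n. m i j * v j)"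
      by (simp add: sum_subtractf)
    also have "(\<Sum>j<n. (if i = j then y else 0) * v j) = (\<Sum>j<n. if i = j then y * v j else 0)"
      by (intro sum.cong) auto
    also have "\<dots> = y * v i" using i by (simp add: sum.delta)
    also have "y * v i - (\<Sum>j<n. m i j * v j) = 0" using eq[OF i] by simp
    finally show "(B *\<^sub>v vv) $ i = 0\<^sub>v n $ i" using i by simp
  qed
  have adj: "adj_mat B * B = det B \<cdot>\<^sub>m 1\<^sub>m n" using adj_mat[OF B] by simp
  have "(adj_mat B * B) *\<^sub>v vv = adj_mat B *\<^sub>v (B *\<^sub>v vv)"
    by (rule assoc_mult_mat_vec[OF adj_mat(1)[OF B] B vv])
  also have "\<dots> = 0\<^sub>v n" unfolding Bv
    by (rule eq_vecI) (use adj_mat(1)[OF B] in auto)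
  finally have "(det B \<cdot>\<^sub>m 1\<^sub>m n) *\<^sub>v vv = 0\<^sub>v n" unfolding adj .
  hence "((det B \<cdot>\<^sub>m 1\<^sub>m n) *\<^sub>v vv) $ k = 0" using k by simp
  moreover have "((det B \<cdot>\<^sub>m 1\<^sub>m n) *\<^sub>v vv) $ k = det B * v k"
  proof -
    have "((det B \<cdot>\<^sub>m 1\<^sub>m n) *\<^sub>v vv) $ k = (\<Sum>j = 0..<n. det B * (if j = k then 1 else 0) * vv $ j)"
      using k vv by (simp add: mult_mat_vec_def scalar_prod_def)
    also have "\<dots> = (\<Sum>j\<in>{0..<n}. if j = k then det B * v j else 0)"
      using k by (intro sum.cong refl) (auto simp: vv_def)
    also have "\<dots> = det B * v k" using k by (simp add: sum.delta)
    finally show ?thesis .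
  qed
  ultimately show ?thesis using detB unfolding M_def by simp
qed

definition subr :: "'a::comm_ring_1 set \<Rightarrow> bool" where
  "subr S \<longleftrightarrow> 0 \<in> S \<and> 1 \<in> S \<and> (\<forall>a\<in>S. \<forall>b\<in>S. a + b \<in> S \<and> a * b \<in> S) \<and> (\<forall>a\<in>S. - a \<in> S)"

definition PS :: "'a::comm_ring_1 set \<Rightarrow> 'a poly set" where
  "PS S = {q. \<forall>i. coeff q i \<in> S}"

context fixes S :: "'a::comm_ring_1 set" assumes S: "subr S"
begin

lemma S0: "0 \<in> S" and S1: "1 \<in> S" and Sadd: "a \<in> S \<Longrightarrow> b \<in> S \<Longrightarrow> a + b \<in> S"
  and Smult: "a \<in> S \<Longrightarrow> b \<in> S \<Longrightarrow> a * b \<in> S" and Sminus: "a \<in> S \<Longrightarrow> - a \<in> S"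
  using S unfolding subr_def by auto

lemma Sdiff: "a \<in> S \<Longrightarrow> b \<in> S \<Longrightarrow> a - b \<in> S"
  using Sadd[OF _ Sminus[of b]] by simp

lemma Ssum: "(\<And>i. i \<in> A \<Longrightarrow> f i \<in> S) \<Longrightarrow> sum f A \<in> S"
proof (induction A rule: infinite_finite_induct)
  case (infinite A) thus ?case using S0 by simp
next
  case empty thus ?case using S0 by simp
next
  case (insert x F) thus ?case using Sadd by simp
qed

lemma Sprod: "(\<And>i. i \<in> A \<Longrightarrow> f i \<in> S) \<Longrightarrow> prod f A \<in> S"
proof (induction A rule: infinite_finite_induct)
  case (infinite A) thus ?case using S1 by simp
next
  case empty thus ?case using S1 by simp
next
  case (insert x F) thus ?case using Smult by simp
qed

lemma Spow: "a \<in> S \<Longrightarrow> a ^ k \<in> S"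
  by (induction k) (auto intro: Smult S1)

lemma PS_add: "a \<in> PS S \<Longrightarrow> b \<in> PS S \<Longrightarrow> a + b \<in> PS S"
  unfolding PS_def by (auto intro: Sadd)

lemma PS_minus: "a \<in> PS S \<Longrightarrow> - a \<in> PS S"
  unfolding PS_def by (auto intro: Sminus)

lemma PS_mult: "a \<in> PS S \<Longrightarrow> b \<in> PS S \<Longrightarrow> a * b \<in> PS S"
  unfolding PS_def by (auto simp: coeff_mult intro!: Ssum Smult)

lemma PS_0: "0 \<in> PS S" unfolding PS_def using S0 by simp

lemma PS_1: "1 \<in> PS S" unfolding PS_def using S0 S1 by (simp add: coeff_1)

lemma PS_const: "a \<in> S \<Longrightarrow> [:a:] \<in> PS S"
  unfolding PS_def using S0 by (simp add: coeff_pCons split: nat.splits)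

lemma PS_X: "[:0, 1:] \<in> PS S"
  unfolding PS_def using S0 S1 by (simp add: coeff_pCons split: nat.splits)

lemma PS_sum: "(\<And>i. i \<in> A \<Longrightarrow> f i \<in> PS S) \<Longrightarrow> sum f A \<in> PS S"
proof (induction A rule: infinite_finite_induct)
  case (infinite A) thus ?case using PS_0 by simp
next
  case empty thus ?case using PS_0 by simp
next
  case (insert x F) thus ?case using PS_add by simp
qed

lemma PS_prod: "(\<And>i. i \<in> A \<Longrightarrow> f i \<in> PS S) \<Longrightarrow> prod f A \<in> PS S"
proof (induction A rule: infinite_finite_induct)
  case (infinite A) thus ?case using PS_1 by simp
next
  case empty thus ?case using PS_1 by simp
next
  case (insert x F) thus ?case using PS_mult by simp
qed

lemma PS_signof: "q \<in> PS S \<Longrightarrow> signof p * q \<in> PS S"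
  by (cases "evenperm p") (auto simp: sign_def intro: PS_minus)

lemma char_poly_PS:
  assumes m: "\<And>i j. i < n \<Longrightarrow> j < n \<Longrightarrow> m i j \<in> S"
  shows "char_poly (mat n n (\<lambda>(i,j). m i j)) \<in> PS S"
proof -
  define M where "M = mat n n (\<lambda>(i,j). m i j)"
  have M: "M \<in> carrier_mat n n" unfolding M_def by simp
  have C: "char_poly_matrix M \<in> carrier_mat n n" using M by simp
  have ent: "char_poly_matrix M $$ (i,j) \<in> PS S" if "i < n" "j < n" for i j
  proof -
    have "char_poly_matrix M $$ (i,j) = (if i = j then [:0,1:] else 0) + [: - m i j :]"
      using that M unfolding char_poly_matrix_def M_def by simp
    thus ?thesis using PS_add PS_X PS_0 PS_const Sminus m that by auto
  qed
  have "char_poly M = (\<Sum>p | p permutes {0..<n}. signof p * (\<Prod>i = 0..<n. char_poly_matrix M $$ (i, p i)))"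
    unfolding char_poly_def using det_def'[OF C] .
  also have "\<dots> \<in> PS S"
  proof (rule PS_sum)
    fix p assume "p \<in> {p. p permutes {0..<n}}"
    hence p: "p permutes {0..<n}" by simp
    have "p i < n" if "i < n" for i using p that by (meson atLeastLessThan_iff permutes_in_image zero_le)
    hence "(\<Prod>i = 0..<n. char_poly_matrix M $$ (i, p i)) \<in> PS S"
      by (intro PS_prod ent) auto
    thus "signof p * (\<Prod>i = 0..<n. char_poly_matrix M $$ (i, p i)) \<in> PS S" by (rule PS_signof)
  qed
  finally show ?thesis unfolding M_def .
qed

definition inspan :: "nat \<Rightarrow> 'a \<Rightarrow> 'a \<Rightarrow> bool" where
  "inspan n a x \<longleftrightarrow> (\<exists>c. (\<forall>i. c i \<in> S) \<and> x = (\<Sum>i<n. c i * a ^ i))"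

lemma inspan_0: "inspan n a 0"
  unfolding inspan_def using S0 by (intro exI[of _ "\<lambda>_. 0"]) auto

lemma inspan_add: "inspan n a x \<Longrightarrow> inspan n a z \<Longrightarrow> inspan n a (x + z)"
proof -
  assume "inspan n a x" "inspan n a z"
  then obtain c d where c: "\<forall>i. c i \<in> S" "x = (\<Sum>i<n. c i * a ^ i)"
    and d: "\<forall>i. d i \<in> S" "z = (\<Sum>i<n. d i * a ^ i)" unfolding inspan_def by blast
  have "x + z = (\<Sum>i<n. (c i + d i) * a ^ i)" using c d by (simp add: sum.distrib algebra_simps)
  thus ?thesis unfolding inspan_def using c d Sadd by (intro exI[of _ "\<lambda>i. c i + d i"]) auto
qed

lemma inspan_smult: "s \<in> S \<Longrightarrow> inspan n a x \<Longrightarrow> inspan n a (s * x)"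
proof -
  assume s: "s \<in> S" and "inspan n a x"
  then obtain c where c: "\<forall>i. c i \<in> S" "x = (\<Sum>i<n. c i * a ^ i)" unfolding inspan_def by blast
  have "s * x = (\<Sum>i<n. (s * c i) * a ^ i)" using c by (simp add: sum_distrib_left algebra_simps)
  thus ?thesis unfolding inspan_def using c s Smult by (intro exI[of _ "\<lambda>i. s * c i"]) auto
qed

lemma inspan_sum: "(\<And>i. i \<in> A \<Longrightarrow> inspan n a (f i)) \<Longrightarrow> inspan n a (sum f A)"
proof (induction A rule: infinite_finite_induct)
  case (infinite A) thus ?case using inspan_0 by simp
next
  case empty thus ?case using inspan_0 by simp
next
  case (insert x F) thus ?case using inspan_add by simp
qed

lemma inspan_pow_lt: "k < n \<Longrightarrow> inspan n a (a ^ k)"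
proof -
  assume k: "k < n"
  have "(\<Sum>i<n. (if i = k then 1 else 0) * a ^ i) = (\<Sum>i<n. if i = k then a ^ i else 0)"
    by (intro sum.cong) auto
  also have "\<dots> = a ^ k" using k by (simp add: sum.delta)
  finally have "(\<Sum>i<n. (if i = k then 1 else 0) * a ^ i) = a ^ k" .
  thus ?thesis unfolding inspan_def using S0 S1
    by (intro exI[of _ "\<lambda>i. if i = k then 1 else 0"]) auto
qed

lemma inspan_pow:
  assumes an: "inspan n a (a ^ n)"
  shows "inspan n a (a ^ k)"
proof (induction k rule: less_induct)
  case (less k)
  show ?case
  proof (cases "k < n")
    case True thus ?thesis by (rule inspan_pow_lt)
  next
    case False
    obtain c where c: "\<forall>i. c i \<in> S" "a ^ n = (\<Sum>i<n. c i * a ^ i)" using an unfolding inspan_def by blast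
    have "a ^ k = a ^ (k - n) * a ^ n" using False by (simp add: power_add[symmetric])
    also have "\<dots> = (\<Sum>i<n. c i * a ^ (k - n + i))" unfolding c(2)
      by (simp add: sum_distrib_left power_add algebra_simps)
    also have "inspan n a \<dots>"
    proof (rule inspan_sum)
      fix i assume "i \<in> {..<n}"
      hence "k - n + i < k" using False by auto
      thus "inspan n a (c i * a ^ (k - n + i))" using less c(1) inspan_smult by blast
    qed
    finally show ?thesis .
  qed
qed

theorem integral_tc:
  fixes a :: 'a and g :: "nat \<Rightarrow> 'a"
  assumes n: "n \<ge> 1" and an: "inspan n a (a ^ n)" and g: "\<And>i. g i \<in> S"
  shows "\<exists>Q. degree Q = n \<and> coeff Q n = 1 \<and> (\<forall>i. coeff Q i \<in> S) \<and> poly Q (\<Sum>i\<le>d. g i * a ^ i) = 0"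
proof -
  define y where "y = (\<Sum>i\<le>d. g i * a ^ i)"
  have "\<forall>j. \<exists>c. (\<forall>i. c i \<in> S) \<and> y * a ^ j = (\<Sum>i<n. c i * a ^ i)"
  proof
    fix j
    have "y * a ^ j = (\<Sum>i\<le>d. g i * a ^ i * a ^ j)" unfolding y_def
      by (simp add: sum_distrib_right)
    also have "\<dots> = (\<Sum>i\<le>d. g i * a ^ (i + j))" by (simp add: power_add mult.assoc)
    also have "inspan n a \<dots>" by (rule inspan_sum, rule inspan_smult[OF g], rule inspan_pow[OF an])
    finally show "\<exists>c. (\<forall>i. c i \<in> S) \<and> y * a ^ j = (\<Sum>i<n. c i * a ^ i)" unfolding inspan_def .
  qed
  then obtain m where m: "\<And>j. (\<forall>i. m j i \<in> S) \<and> y * a ^ j = (\<Sum>i<n. m j i * a ^ i)"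
    by metis
  define Q where "Q = char_poly (mat n n (\<lambda>(i,j). m i j))"
  have "poly Q y * a ^ 0 = 0" unfolding Q_def
    by (rule det_trick[of n y "\<lambda>i. a ^ i" m 0]) (use m n in auto)
  hence "poly Q y = 0" by simp
  moreover have "degree Q = n \<and> coeff Q n = 1" unfolding Q_def
    by (rule degree_monic_char_poly) simp
  moreover have "Q \<in> PS S" unfolding Q_def by (rule char_poly_PS) (use m in auto)
  ultimately show ?thesis unfolding y_def PS_def by blast
qed

end


context fixes p :: nat assumes p: "prime p"
begin

lemma Qpbar_field: "field (Qpbar p)"
  unfolding Qpbar_def using algebraic_closure.axioms(1)[OF field.alg_closureE(1)[OF Qp_field[OF p]]] .

lemma Qpbar_cring: "cring (Qpbar p)"
  using Qpbar_field by (simp add: field.axioms(1) domain.axioms(1))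

lemma emb_hom: "emb p \<in> Ring.ring_hom (Qp p) (Qpbar p)"
  unfolding emb_def Qpbar_def using field.alg_closureE(2)[OF Qp_field[OF p]] .

lemma Qp_cring': "cring (Qp p)" using Qp_cring[OF p] .

lemma emb_closed: "A \<in> carrier (Qp p) \<Longrightarrow> emb p A \<in> carrier (Qpbar p)"
  using emb_hom by (simp add: ring_hom_closed)

lemma emb_add: "A \<in> carrier (Qp p) \<Longrightarrow> B \<in> carrier (Qp p) \<Longrightarrow>
    emb p (A \<oplus>\<^bsub>Qp p\<^esub> B) = emb p A \<oplus>\<^bsub>Qpbar p\<^esub> emb p B"
  using emb_hom by (simp add: ring_hom_add)

lemma emb_mult: "A \<in> carrier (Qp p) \<Longrightarrow> B \<in> carrier (Qp p) \<Longrightarrow>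
    emb p (A \<otimes>\<^bsub>Qp p\<^esub> B) = emb p A \<otimes>\<^bsub>Qpbar p\<^esub> emb p B"
  using emb_hom by (simp add: ring_hom_mult)

lemma emb_one: "emb p \<one>\<^bsub>Qp p\<^esub> = \<one>\<^bsub>Qpbar p\<^esub>"
  using emb_hom by (simp add: ring_hom_one)

lemma emb_zero: "emb p \<zero>\<^bsub>Qp p\<^esub> = \<zero>\<^bsub>Qpbar p\<^esub>"
  using ring_hom_zero[OF emb_hom cring.axioms(1)[OF Qp_cring'] cring.axioms(1)[OF Qpbar_cring]] .

lemma emb_neg: "A \<in> carrier (Qp p) \<Longrightarrow> emb p (\<ominus>\<^bsub>Qp p\<^esub> A) = \<ominus>\<^bsub>Qpbar p\<^esub> emb p A"
proof -
  assume A: "A \<in> carrier (Qp p)"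
  have "ring_hom_cring (Qp p) (Qpbar p) (emb p)"
    using emb_hom Qp_cring' Qpbar_cring by (intro ring_hom_cringI) (auto simp: cring.axioms(1))
  thus ?thesis using A by (rule ring_hom_cring.hom_a_inv)
qed

lemma mem_carrier_cls:
  assumes A: "A \<in> carrier (Qp p)" and u: "u \<in> A"
  shows "padic_cauchy p u \<and> A = padic_class p u"
proof -
  obtain w where w: "padic_cauchy p w" "A = padic_class p w" using carrier_cases[OF p A] by blast
  have r: "(w, u) \<in> padic_rel p" using u w mem_cls[OF p] by auto
  hence "padic_class p w = padic_class p u"
    unfolding padic_class_def by (rule equiv_class_eq[OF padic_equiv[OF p]])
  thus ?thesis using r w by (simp add: rel_iff[OF p])
qed

lemma Zp_iff: "A \<in> Zp p \<longleftrightarrow> (\<exists>u. padic_cauchy p u \<and> (\<forall>n. u n \<in> \<int>) \<and> A = padic_class p u)"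
proof
  assume "A \<in> Zp p"
  then obtain u where "A \<in> carrier (Qp p)" "u \<in> A" "\<forall>n. u n \<in> \<int>" unfolding Zp_def by blast
  thus "\<exists>u. padic_cauchy p u \<and> (\<forall>n. u n \<in> \<int>) \<and> A = padic_class p u"
    using mem_carrier_cls by blast
next
  assume "\<exists>u. padic_cauchy p u \<and> (\<forall>n. u n \<in> \<int>) \<and> A = padic_class p u"
  then obtain u where u: "padic_cauchy p u" "\<forall>n. u n \<in> \<int>" "A = padic_class p u" by blast
  have "u \<in> A" using u by (simp add: mem_cls[OF p] rel_iff[OF p] null_zero[OF p])
  thus "A \<in> Zp p" unfolding Zp_def using u cls_in[OF p] by auto
qed

lemma Zp_sub: "A \<in> Zp p \<Longrightarrow> A \<in> carrier (Qp p)"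
  unfolding Zp_def by simp

lemma Zp_add: "A \<in> Zp p \<Longrightarrow> B \<in> Zp p \<Longrightarrow> A \<oplus>\<^bsub>Qp p\<^esub> B \<in> Zp p"
proof -
  assume "A \<in> Zp p" "B \<in> Zp p"
  then obtain u w where u: "padic_cauchy p u" "\<forall>n. u n \<in> \<int>" "A = padic_class p u"
    and w: "padic_cauchy p w" "\<forall>n. w n \<in> \<int>" "B = padic_class p w" unfolding Zp_iff by blast
  have "A \<oplus>\<^bsub>Qp p\<^esub> B = padic_class p (\<lambda>n. u n + w n)" using u w add_cls[OF p] by simp
  moreover have "\<forall>n. u n + w n \<in> \<int>" using u w by auto
  ultimately show ?thesis unfolding Zp_iff using cauchy_add[OF p u(1) w(1)] by blast
qed

lemma Zp_mult: "A \<in> Zp p \<Longrightarrow> B \<in> Zp p \<Longrightarrow> A \<otimes>\<^bsub>Qp p\<^esub> B \<in> Zp p"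
proof -
  assume "A \<in> Zp p" "B \<in> Zp p"
  then obtain u w where u: "padic_cauchy p u" "\<forall>n. u n \<in> \<int>" "A = padic_class p u"
    and w: "padic_cauchy p w" "\<forall>n. w n \<in> \<int>" "B = padic_class p w" unfolding Zp_iff by blast
  have "A \<otimes>\<^bsub>Qp p\<^esub> B = padic_class p (\<lambda>n. u n * w n)" using u w mult_cls[OF p] by simp
  moreover have "\<forall>n. u n * w n \<in> \<int>" using u w by auto
  ultimately show ?thesis unfolding Zp_iff using cauchy_mult[OF p u(1) w(1)] by blast
qed

lemma Zp_neg: "A \<in> Zp p \<Longrightarrow> \<ominus>\<^bsub>Qp p\<^esub> A \<in> Zp p"
proof -
  assume "A \<in> Zp p"
  then obtain u where u: "padic_cauchy p u" "\<forall>n. u n \<in> \<int>" "A = padic_class p u" unfolding Zp_iff by blast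
  have c: "padic_class p (\<lambda>n. - u n) \<in> carrier (Qp p)" using cls_in[OF p cauchy_minus[OF p u(1)]] .
  have "padic_class p (\<lambda>n. - u n) \<oplus>\<^bsub>Qp p\<^esub> A = \<zero>\<^bsub>Qp p\<^esub>"
    using u by (simp add: Qp_simps(3) add_cls[OF p] cauchy_minus[OF p])
  hence "\<ominus>\<^bsub>Qp p\<^esub> A = padic_class p (\<lambda>n. - u n)"
    using abelian_group.minus_equality[OF Qp_abelian_group[OF p]] c u cls_in[OF p] by blast
  moreover have "\<forall>n. - u n \<in> \<int>" using u by auto
  ultimately show ?thesis unfolding Zp_iff using cauchy_minus[OF p u(1)] by blast
qed

lemma Zp_int: "padic_class p (\<lambda>_. of_int a) \<in> Zp p"
  unfolding Zp_iff by (intro exI[of _ "\<lambda>_. of_int a"]) (auto simp: cauchy_const[OF p])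

lemma Zp_one: "\<one>\<^bsub>Qp p\<^esub> \<in> Zp p"
  using Zp_int[of 1] by (simp add: Qp_simps)

lemma Zp_zero: "\<zero>\<^bsub>Qp p\<^esub> \<in> Zp p"
  using Zp_int[of 0] by (simp add: Qp_simps)

lemma rat_Zp:
  assumes b: "b \<noteq> 0" "\<not> int p dvd b"
  shows "padic_class p (\<lambda>_. of_int a / of_int b) \<in> Zp p"
proof -
  define r :: rat where "r = of_int a / of_int b"
  have pi: "prime (int p)" using p by simp
  have "\<forall>n. \<exists>x y. b * x + int p ^ n * y = 1"
  proof
    fix n
    have "coprime (int p) b" using prime_imp_coprime[OF pi b(2)] .
    hence "coprime b (int p ^ n)" by (simp add: coprime_commute)
    hence "gcd b (int p ^ n) = 1" by simp
    thus "\<exists>x y. b * x + int p ^ n * y = 1" using bezout_int[of b "int p ^ n"] by (metis mult.commute)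
  qed
  then obtain x y where xy: "\<And>n. b * x n + int p ^ n * y n = 1" by metis
  define c :: "nat \<Rightarrow> rat" where "c n = of_int (a * x n)" for n
  have diff: "r - c n = of_int (a * y n) * of_int (int p ^ n) / of_int b" for n
  proof -
    have "of_int a = (of_int (a * (b * x n + int p ^ n * y n)) :: rat)" using xy[of n] by simp
    thus ?thesis unfolding r_def c_def using b by (simp add: field_simps)
  qed
  have mb: "multiplicity (int p) b = 0" using b(2) by (rule not_dvd_imp_multiplicity_0)
  have small: "sm p (int n) (r - c n)" for n
  proof (cases "a * y n = 0")
    case True
    hence "r - c n = 0" using diff[of n] by auto
    thus ?thesis by simp
  next
    case False
    have pn: "int p ^ n \<noteq> 0" using p by (simp add: prime_gt_0_nat)
    have "r - c n = of_int (a * y n * int p ^ n) / of_int b" using diff by simp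
    hence "rat_vp p (r - c n) = mp p (a * y n * int p ^ n) - mp p b"
      using rat_vp_frac[OF p, of "a * y n * int p ^ n" b] False pn b by simp
    also have "\<dots> = mp p (a * y n) + int n" using mp_mult[OF p False pn] mb
      multiplicity_prime_power[OF prime_elem_intp[OF p], of n] by simp
    finally have "int n \<le> rat_vp p (r - c n)" by simp
    thus ?thesis by (simp add: sm_def)
  qed
  have null: "padic_null p (\<lambda>n. r - c n)"
    unfolding null_sm
  proof
    fix k
    have "\<forall>n\<ge>nat k. sm p k (r - c n)"
    proof (intro allI impI)
      fix n assume "nat k \<le> n"
      hence "k \<le> int n" by linarith
      thus "sm p k (r - c n)" using sm_mono small by blast
    qed
    thus "\<exists>N. \<forall>n\<ge>N. sm p k (r - c n)" by blast
  qed
  have cc: "padic_cauchy p c"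
  proof -
    have "padic_cauchy p (\<lambda>n. r + - (r - c n))"
      using cauchy_add[OF p cauchy_const[OF p] cauchy_minus[OF p null_imp_cauchy[OF p null]]] .
    thus ?thesis by simp
  qed
  have "padic_class p (\<lambda>_. r) = padic_class p c"
    using cls_eq[OF p cauchy_const[OF p] cc] null by simp
  moreover have "\<forall>n. c n \<in> \<int>" unfolding c_def by simp
  ultimately show ?thesis unfolding Zp_iff r_def using cc by blast
qed

lemma rq_closed: "rat_to_Qpbar p r \<in> carrier (Qpbar p)"
  unfolding rat_to_Qpbar_def by (rule emb_closed, rule cls_in[OF p cauchy_const[OF p]])

lemma rq_mult: "rat_to_Qpbar p (r * s) = rat_to_Qpbar p r \<otimes>\<^bsub>Qpbar p\<^esub> rat_to_Qpbar p s"
proof -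
  have c1: "padic_class p (\<lambda>_. r) \<in> carrier (Qp p)" by (rule cls_in[OF p cauchy_const[OF p]])
  have c2: "padic_class p (\<lambda>_. s) \<in> carrier (Qp p)" by (rule cls_in[OF p cauchy_const[OF p]])
  show ?thesis unfolding rat_to_Qpbar_def
    using mult_cls[OF p cauchy_const[OF p] cauchy_const[OF p], of r s] emb_mult[OF c1 c2] by simp
qed

lemma rq_zero: "rat_to_Qpbar p 0 = \<zero>\<^bsub>Qpbar p\<^esub>"
  unfolding rat_to_Qpbar_def using emb_zero by (simp add: Qp_simps)

end

definition pr :: "nat \<Rightarrow> nat" where "pr q = (if prime q then q else 2)"

lemma prime_pr: "prime (pr q)" unfolding pr_def by simp

lemma pr_prime[simp]: "prime q \<Longrightarrow> pr q = q" unfolding pr_def by simp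

lemma RR_cring: "cring (Qpbar (pr q))" using Qpbar_cring[OF prime_pr] .

lemma RR_field: "field (Qpbar (pr q))" using Qpbar_field[OF prime_pr] .

typedef T = "{f :: nat \<Rightarrow> qbar. \<forall>q. f q \<in> carrier (Qpbar (pr q))}"
  morphisms RT AT
  by (rule exI[of _ "\<lambda>q. \<zero>\<^bsub>Qpbar (pr q)\<^esub>"]) (simp add: cring.cring_simprules(2)[OF RR_cring])

lemma RT_in: "RT a q \<in> carrier (Qpbar (pr q))"
  using RT[of a] by simp

lemma AT_inv: "(\<And>q. f q \<in> carrier (Qpbar (pr q))) \<Longrightarrow> RT (AT f) = f"
  by (rule AT_inverse) simp

lemma T_eq: "a = b \<longleftrightarrow> (\<forall>q. RT a q = RT b q)"
  using RT_inject by auto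

instantiation T :: comm_ring_1
begin
definition zero_T_def: "0 = AT (\<lambda>q. \<zero>\<^bsub>Qpbar (pr q)\<^esub>)"
definition one_T_def: "1 = AT (\<lambda>q. \<one>\<^bsub>Qpbar (pr q)\<^esub>)"
definition plus_T_def: "a + b = AT (\<lambda>q. RT a q \<oplus>\<^bsub>Qpbar (pr q)\<^esub> RT b q)"
definition times_T_def: "a * b = AT (\<lambda>q. RT a q \<otimes>\<^bsub>Qpbar (pr q)\<^esub> RT b q)"
definition uminus_T_def: "- a = AT (\<lambda>q. \<ominus>\<^bsub>Qpbar (pr q)\<^esub> RT a q)"
definition minus_T_def: "(a::T) - b = a + - b"

lemma RT_0: "RT 0 q = \<zero>\<^bsub>Qpbar (pr q)\<^esub>"
  unfolding zero_T_def by (subst AT_inv) (auto simp: cring.cring_simprules(2)[OF RR_cring])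
lemma RT_1: "RT 1 q = \<one>\<^bsub>Qpbar (pr q)\<^esub>"
  unfolding one_T_def by (subst AT_inv) (auto simp: cring.cring_simprules(6)[OF RR_cring])
lemma RT_add: "RT (a + b) q = RT a q \<oplus>\<^bsub>Qpbar (pr q)\<^esub> RT b q"
  unfolding plus_T_def by (subst AT_inv) (auto simp: cring.cring_simprules(1)[OF RR_cring] RT_in)
lemma RT_mult: "RT (a * b) q = RT a q \<otimes>\<^bsub>Qpbar (pr q)\<^esub> RT b q"
  unfolding times_T_def by (subst AT_inv) (auto simp: cring.cring_simprules(5)[OF RR_cring] RT_in)
lemma RT_uminus: "RT (- a) q = \<ominus>\<^bsub>Qpbar (pr q)\<^esub> RT a q"
  unfolding uminus_T_def by (subst AT_inv) (auto simp: cring.cring_simprules(3)[OF RR_cring] RT_in)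

instance
proof
  fix a b c :: T
  show "a + b + c = a + (b + c)"
    by (simp add: T_eq RT_add RT_in cring.cring_simprules(7)[OF RR_cring])
  show "a + b = b + a"
    by (simp add: T_eq RT_add RT_in cring.cring_simprules(10)[OF RR_cring])
  show "0 + a = a"
    by (simp add: T_eq RT_add RT_0 RT_in cring.cring_simprules(8)[OF RR_cring])
  show "- a + a = 0"
    by (simp add: T_eq RT_add RT_0 RT_uminus RT_in cring.cring_simprules(9)[OF RR_cring])
  show "a - b = a + - b" by (simp add: minus_T_def)
  show "a * b * c = a * (b * c)"
    by (simp add: T_eq RT_mult RT_in cring.cring_simprules(11)[OF RR_cring])
  show "a * b = b * a"
    by (simp add: T_eq RT_mult RT_in cring.cring_simprules(14)[OF RR_cring])
  show "1 * a = a"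
    by (simp add: T_eq RT_mult RT_1 RT_in cring.cring_simprules(12)[OF RR_cring])
  show "(a + b) * c = a * c + b * c"
    by (simp add: T_eq RT_mult RT_add RT_in cring.cring_simprules(13)[OF RR_cring])
  show "(0::T) \<noteq> 1"
  proof
    assume "(0::T) = 1"
    hence "RT 0 0 = RT 1 0" by simp
    moreover have "\<one>\<^bsub>Qpbar (pr 0)\<^esub> \<noteq> \<zero>\<^bsub>Qpbar (pr 0)\<^esub>"
      using domain.one_not_zero[OF field.axioms(1)[OF RR_field]] .
    ultimately show False by (simp add: RT_0 RT_1)
  qed
qed
end


lemma RR_ring: "ring (Qpbar (pr q))" using cring.axioms(1)[OF RR_cring] .

lemma RR_am: "abelian_monoid (Qpbar (pr q))"
  using abelian_group.axioms(1)[OF ring.axioms(1)[OF RR_ring]] .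

lemma RR_zero_pow: "(n::nat) \<noteq> 0 \<Longrightarrow> \<zero>\<^bsub>Qpbar (pr q)\<^esub> [^]\<^bsub>Qpbar (pr q)\<^esub> n = \<zero>\<^bsub>Qpbar (pr q)\<^esub>"
proof -
  assume n: "n \<noteq> 0"
  interpret R: ring "Qpbar (pr q)" by (rule RR_ring)
  show ?thesis using R.nat_pow_zero[OF n] .
qed

lemma RT_pow: "RT (x ^ k) q = RT x q [^]\<^bsub>Qpbar (pr q)\<^esub> k"
  by (induction k) (simp_all add: RT_1 RT_mult power_Suc2 del: power_Suc)

lemma RT_sum: "finite A \<Longrightarrow> RT (sum f A) q = finsum (Qpbar (pr q)) (\<lambda>i. RT (f i) q) A"
proof (induction A rule: finite_induct)
  case empty thus ?case by (simp add: RT_0 abelian_monoid.finsum_empty[OF RR_am])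
next
  case (insert x F)
  have "RT (sum f (insert x F)) q = RT (f x) q \<oplus>\<^bsub>Qpbar (pr q)\<^esub> RT (sum f F) q"
    using insert by (simp add: RT_add)
  also have "\<dots> = finsum (Qpbar (pr q)) (\<lambda>i. RT (f i) q) (insert x F)"
    using insert abelian_monoid.finsum_insert[OF RR_am insert(1,2), of "\<lambda>i. RT (f i) q"] RT_in by auto
  finally show ?case .
qed

primrec hev :: "T list \<Rightarrow> T \<Rightarrow> T" where
  "hev [] y = 0"
| "hev (a # t) y = a * y ^ length t + hev t y"

lemma RT_hev: "RT (hev ts y) q = ring.eval (Qpbar (pr q)) (map (\<lambda>t. RT t q) ts) (RT y q)"
proof (induction ts)
  case Nil thus ?case using ring.eval.simps(1)[OF RR_ring] by (simp add: RT_0)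
next
  case (Cons a t)
  thus ?case using ring.eval.simps(2)[OF RR_ring] by (simp add: RT_add RT_mult RT_pow)
qed

lemma hev_coeffs: "hev (rev (map f [0..<m])) y = (\<Sum>i<m. f i * y ^ i)"
proof (induction m)
  case 0 thus ?case by simp
next
  case (Suc m)
  have "hev (rev (map f [0..<Suc m])) y = f m * y ^ m + hev (rev (map f [0..<m])) y" by simp
  thus ?case using Suc by (simp add: add.commute)
qed

lemma hev_span: "subr S \<Longrightarrow> (\<forall>t\<in>set ts. t \<in> S) \<Longrightarrow> length ts \<le> n \<Longrightarrow> inspan S n y (hev ts y)"
proof (induction ts)
  case Nil thus ?case using inspan_0 by simp
next
  case (Cons a t)
  have "inspan S n y (a * y ^ length t)"
    using Cons.prems inspan_smult[OF Cons.prems(1) _ inspan_pow_lt[OF Cons.prems(1)]] by simp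
  moreover have "inspan S n y (hev t y)" using Cons by simp
  ultimately show ?case using inspan_add[OF Cons.prems(1)] by simp
qed

context fixes p0 :: nat assumes p0: "prime p0"
begin

definition lift :: "qbar \<Rightarrow> T" where
  "lift x = AT (\<lambda>q. if q = p0 then x else \<zero>\<^bsub>Qpbar (pr q)\<^esub>)"

lemma RT_lift: "x \<in> carrier (Qpbar p0) \<Longrightarrow> RT (lift x) q = (if q = p0 then x else \<zero>\<^bsub>Qpbar (pr q)\<^esub>)"
  unfolding lift_def
  by (subst AT_inv) (auto simp: p0 cring.cring_simprules(2)[OF RR_cring])

definition SS :: "T set" where "SS = {t. RT t p0 \<in> emb p0 ` Zp p0}"

lemma SS_subr: "subr SS"
  unfolding subr_def SS_def
proof (intro conjI ballI; simp)
  show "RT 0 p0 \<in> emb p0 ` Zp p0" using RT_0 emb_zero[OF p0] Zp_zero[OF p0] p0 by (metis image_eqI pr_prime)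
  show "RT 1 p0 \<in> emb p0 ` Zp p0" using RT_1 emb_one[OF p0] Zp_one[OF p0] p0 by (metis image_eqI pr_prime)
next
  fix a b assume a: "RT a p0 \<in> emb p0 ` Zp p0" and b: "RT b p0 \<in> emb p0 ` Zp p0"
  then obtain A B where A: "A \<in> Zp p0" "RT a p0 = emb p0 A" and B: "B \<in> Zp p0" "RT b p0 = emb p0 B" by blast
  have "RT (a + b) p0 = emb p0 (A \<oplus>\<^bsub>Qp p0\<^esub> B)"
    using A B emb_add[OF p0 Zp_sub[OF p0 A(1)] Zp_sub[OF p0 B(1)]] p0 by (simp add: RT_add)
  thus "RT (a + b) p0 \<in> emb p0 ` Zp p0" using Zp_add[OF p0 A(1) B(1)] by blast
  have "RT (a * b) p0 = emb p0 (A \<otimes>\<^bsub>Qp p0\<^esub> B)"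
    using A B emb_mult[OF p0 Zp_sub[OF p0 A(1)] Zp_sub[OF p0 B(1)]] p0 by (simp add: RT_mult)
  thus "RT (a * b) p0 \<in> emb p0 ` Zp p0" using Zp_mult[OF p0 A(1) B(1)] by blast
next
  fix a assume a: "RT a p0 \<in> emb p0 ` Zp p0"
  then obtain A where A: "A \<in> Zp p0" "RT a p0 = emb p0 A" by blast
  have "RT (- a) p0 = emb p0 (\<ominus>\<^bsub>Qp p0\<^esub> A)"
    using A emb_neg[OF p0 Zp_sub[OF p0 A(1)]] p0 by (simp add: RT_uminus)
  thus "RT (- a) p0 \<in> emb p0 ` Zp p0" using Zp_neg[OF p0 A(1)] by blast
qed

lemma lift_SS: "x \<in> emb p0 ` Zp p0 \<Longrightarrow> lift x \<in> SS"
proof -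
  assume x: "x \<in> emb p0 ` Zp p0"
  hence "x \<in> carrier (Qpbar p0)" using emb_closed[OF p0] Zp_sub[OF p0] by blast
  thus ?thesis unfolding SS_def using x RT_lift by simp
qed

theorem K:
  fixes d :: nat
  assumes al: "\<alpha> \<in> Zpbar p0" and c: "\<And>i. c i \<in> Zp p0"
  shows "finsum (Qpbar p0) (\<lambda>i. emb p0 (c i) \<otimes>\<^bsub>Qpbar p0\<^esub> \<alpha> [^]\<^bsub>Qpbar p0\<^esub> i) {..d} \<in> Zpbar p0"
proof -
  have alc: "\<alpha> \<in> carrier (Qpbar p0)" using al unfolding Zpbar_def by simp
  obtain q0 where q0: "q0 \<noteq> []" "hd q0 = \<one>\<^bsub>Qpbar p0\<^esub>" "set (tl q0) \<subseteq> emb p0 ` Zp p0"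
    "ring.eval (Qpbar p0) q0 \<alpha> = \<zero>\<^bsub>Qpbar p0\<^esub>"
    using al unfolding Zpbar_def by blast
  have tlc: "set (tl q0) \<subseteq> carrier (Qpbar p0)" using q0(3) emb_closed[OF p0] Zp_sub[OF p0] by blast
  have q0e: "q0 = \<one>\<^bsub>Qpbar p0\<^esub> # tl q0" using q0(1,2) by (cases q0) auto
  define n where "n = length (tl q0)"
  have R0: "ring (Qpbar p0)" using RR_ring[of p0] p0 by simp
  have n1: "n \<ge> 1"
  proof (rule ccontr)
    assume "\<not> n \<ge> 1"
    hence "length (tl q0) = 0" unfolding n_def by linarith
    hence "tl q0 = []" using length_0_conv by blast
    hence "q0 = [\<one>\<^bsub>Qpbar p0\<^esub>]" using q0e by simp
    hence "ring.eval (Qpbar p0) q0 \<alpha> = \<one>\<^bsub>Qpbar p0\<^esub>"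
      using ring.eval.simps[OF R0] alc R0 by (simp add: ring.ring_simprules)
    thus False using q0(4) domain.one_not_zero[OF field.axioms(1)[OF Qpbar_field[OF p0]]] by simp
  qed
  define aT where "aT = lift \<alpha>"
  define ts where "ts = 1 # map lift (tl q0)"
  have hev0: "hev ts aT = 0"
    unfolding T_eq
  proof
    fix q
    show "RT (hev ts aT) q = RT 0 q"
    proof (cases "q = p0")
      case True
      have "map (\<lambda>t. RT t q) ts = \<one>\<^bsub>Qpbar p0\<^esub> # tl q0"
        unfolding ts_def using True tlc p0 by (auto simp: RT_1 RT_lift intro!: map_idI)
      hence "map (\<lambda>t. RT t q) ts = q0" using q0e by simp
      moreover have "RT aT q = \<alpha>" unfolding aT_def using RT_lift alc True by simp
      ultimately show ?thesis using q0(4) True p0 by (simp add: RT_hev RT_0)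
    next
      case False
      have mm: "map (\<lambda>x. RT (lift x) q) (tl q0) = map (\<lambda>_. \<zero>\<^bsub>Qpbar (pr q)\<^esub>) (tl q0)"
        by (rule map_cong) (use False tlc RT_lift in auto)
      have "map (\<lambda>t. RT t q) ts = \<one>\<^bsub>Qpbar (pr q)\<^esub> # replicate n \<zero>\<^bsub>Qpbar (pr q)\<^esub> @ []"
        unfolding ts_def n_def using mm by (simp add: RT_1 map_replicate_const comp_def)
      moreover have "RT aT q = \<zero>\<^bsub>Qpbar (pr q)\<^esub>" unfolding aT_def using RT_lift alc False by simp
      moreover have "ring.eval (Qpbar (pr q)) (replicate n \<zero>\<^bsub>Qpbar (pr q)\<^esub> @ []) \<zero>\<^bsub>Qpbar (pr q)\<^esub> = \<zero>\<^bsub>Qpbar (pr q)\<^esub>"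
        using ring.eval_replicate[OF RR_ring, where p="[]" and a="\<zero>\<^bsub>Qpbar (pr q)\<^esub>" and n=n] ring.eval.simps(1)[OF RR_ring]
          ring.ring_simprules(2)[OF RR_ring] by simp
      ultimately show ?thesis using n1 ring.eval.simps(2)[OF RR_ring]
        by (simp add: RT_hev RT_0 RR_zero_pow
            ring.ring_simprules[OF RR_ring])
    qed
  qed
  have hev1: "hev ts aT = aT ^ n + hev (map lift (tl q0)) aT" unfolding ts_def n_def by simp
  have aTn: "aT ^ n = (- 1) * hev (map lift (tl q0)) aT"
    using hev0 hev1 by (simp add: eq_neg_iff_add_eq_0)
  have sl: "\<forall>t\<in>set (map lift (tl q0)). t \<in> SS" using q0(3) lift_SS by auto
  have span0: "inspan SS n aT (hev (map lift (tl q0)) aT)"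
    using hev_span[OF SS_subr sl, of n aT] unfolding n_def by simp
  have span: "inspan SS n aT (aT ^ n)" unfolding aTn
    by (rule inspan_smult[OF SS_subr _ span0]) (use Sminus[OF SS_subr S1[OF SS_subr]] in simp)
  define g where "g i = lift (emb p0 (c i))" for i
  have g: "g i \<in> SS" for i unfolding g_def using c by (intro lift_SS) auto
  obtain Q where Q: "degree Q = n" "coeff Q n = 1" "\<forall>i. coeff Q i \<in> SS" "poly Q (\<Sum>i\<le>d. g i * aT ^ i) = 0"
    using integral_tc[OF SS_subr n1 span, where g=g and d=d] g by blast
  define yT where "yT = (\<Sum>i\<le>d. g i * aT ^ i)"
  have gc: "emb p0 (c i) \<in> carrier (Qpbar p0)" for i using emb_closed[OF p0 Zp_sub[OF p0 c]] .
  have yT: "RT yT p0 = finsum (Qpbar p0) (\<lambda>i. emb p0 (c i) \<otimes>\<^bsub>Qpbar p0\<^esub> \<alpha> [^]\<^bsub>Qpbar p0\<^esub> i) {..d}"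
    unfolding yT_def using p0 gc alc by (simp add: RT_sum RT_mult RT_pow g_def aT_def RT_lift)
  define L where "L = map (\<lambda>t. RT t p0) (rev (map (coeff Q) [0..<Suc n]))"
  have "poly Q yT = hev (rev (map (coeff Q) [0..<Suc n])) yT"
    unfolding hev_coeffs poly_altdef Q(1) by (simp add: lessThan_Suc_atMost)
  hence "RT (poly Q yT) p0 = RT (hev (rev (map (coeff Q) [0..<Suc n])) yT) p0" by (simp only:)
  also have "\<dots> = ring.eval (Qpbar p0) L (RT yT p0)"
    unfolding L_def RT_hev pr_prime[OF p0] ..
  finally have "RT (poly Q yT) p0 = ring.eval (Qpbar p0) L (RT yT p0)" .
  hence ev: "ring.eval (Qpbar p0) L (RT yT p0) = \<zero>\<^bsub>Qpbar p0\<^esub>"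
    using Q(4) p0 unfolding yT_def by (simp add: RT_0)
  have L1: "L \<noteq> []" "hd L = \<one>\<^bsub>Qpbar p0\<^esub>"
    unfolding L_def using Q(2) p0 by (simp_all add: RT_1)
  have L2: "set (tl L) \<subseteq> emb p0 ` Zp p0"
  proof
    fix x assume "x \<in> set (tl L)"
    hence "x \<in> set L" by (meson list.set_sel(2) L1(1))
    then obtain i where "x = RT (coeff Q i) p0" unfolding L_def by auto
    thus "x \<in> emb p0 ` Zp p0" using Q(3) unfolding SS_def by auto
  qed
  have "RT yT p0 \<in> carrier (Qpbar p0)" using RT_in[of yT p0] p0 by simp
  thus ?thesis using ev L1 L2 yT unfolding Zpbar_def by auto
qed

end


lemma K1:
  assumes p: "prime p" and x: "x \<in> Zpbar p" and c: "c \<in> Zp p"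
  shows "emb p c \<otimes>\<^bsub>Qpbar p\<^esub> x \<in> Zpbar p"
proof -
  interpret R: cring "Qpbar p" by (rule Qpbar_cring[OF p])
  define c' where "c' i = (if i = 1 then c else \<zero>\<^bsub>Qp p\<^esub>)" for i :: nat
  have c': "c' i \<in> Zp p" for i unfolding c'_def using c Zp_zero[OF p] by simp
  have xc: "x \<in> carrier (Qpbar p)" using x unfolding Zpbar_def by simp
  have ec: "emb p c \<in> carrier (Qpbar p)" using emb_closed[OF p Zp_sub[OF p c]] .
  have "finsum (Qpbar p) (\<lambda>i. emb p (c' i) \<otimes>\<^bsub>Qpbar p\<^esub> x [^]\<^bsub>Qpbar p\<^esub> i) {..Suc 0} \<in> Zpbar p"
    using K[OF p x c'] .
  moreover have "finsum (Qpbar p) (\<lambda>i. emb p (c' i) \<otimes>\<^bsub>Qpbar p\<^esub> x [^]\<^bsub>Qpbar p\<^esub> i) {..Suc 0}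
      = emb p c \<otimes>\<^bsub>Qpbar p\<^esub> x"
  proof -
    have f: "(\<lambda>i. emb p (c' i) \<otimes>\<^bsub>Qpbar p\<^esub> x [^]\<^bsub>Qpbar p\<^esub> i) \<in> {..Suc 0} \<rightarrow> carrier (Qpbar p)"
      using emb_closed[OF p Zp_sub[OF p c']] xc by auto
    define F where "F = (\<lambda>i::nat. emb p (c' i) \<otimes>\<^bsub>Qpbar p\<^esub> x [^]\<^bsub>Qpbar p\<^esub> i)"
    have fF: "F \<in> {..Suc 0} \<rightarrow> carrier (Qpbar p)" using f unfolding F_def .
    have "finsum (Qpbar p) F {..Suc 0} = F (Suc 0) \<oplus>\<^bsub>Qpbar p\<^esub> finsum (Qpbar p) F {..0}"
      by (rule R.finsum_Suc[OF fF])
    also have "finsum (Qpbar p) F {..0} = F 0" by (rule R.finsum_0) (use fF in auto)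
    finally have "finsum (Qpbar p) (\<lambda>i. emb p (c' i) \<otimes>\<^bsub>Qpbar p\<^esub> x [^]\<^bsub>Qpbar p\<^esub> i) {..Suc 0}
       = emb p (c' (Suc 0)) \<otimes>\<^bsub>Qpbar p\<^esub> x [^]\<^bsub>Qpbar p\<^esub> (Suc 0) \<oplus>\<^bsub>Qpbar p\<^esub>
         (emb p (c' 0) \<otimes>\<^bsub>Qpbar p\<^esub> x [^]\<^bsub>Qpbar p\<^esub> (0::nat))" unfolding F_def .
    also have "\<dots> = emb p c \<otimes>\<^bsub>Qpbar p\<^esub> x"
      unfolding c'_def using emb_zero[OF p] ec xc by simp
    finally show ?thesis .
  qed
  ultimately show ?thesis by simp
qed

lemma qeval_smult:
  assumes p: "prime p" and al: "\<alpha> \<in> carrier (Qpbar p)" and c: "c \<noteq> 0"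
  shows "qeval p (smult c f) \<alpha> = rat_to_Qpbar p c \<otimes>\<^bsub>Qpbar p\<^esub> qeval p f \<alpha>"
proof -
  interpret R: cring "Qpbar p" by (rule Qpbar_cring[OF p])
  have "qeval p (smult c f) \<alpha> = finsum (Qpbar p)
      (\<lambda>i. rat_to_Qpbar p c \<otimes>\<^bsub>Qpbar p\<^esub> (rat_to_Qpbar p (coeff f i) \<otimes>\<^bsub>Qpbar p\<^esub> \<alpha> [^]\<^bsub>Qpbar p\<^esub> i)) {..degree f}"
    unfolding qeval_def using c al rq_closed[OF p]
    by (intro R.finsum_cong') (auto simp: rq_mult[OF p] R.m_assoc)
  also have "\<dots> = rat_to_Qpbar p c \<otimes>\<^bsub>Qpbar p\<^esub> qeval p f \<alpha>"
    unfolding qeval_def using al rq_closed[OF p]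
    by (intro R.finsum_rdistr[symmetric]) auto
  finally show ?thesis .
qed

definition Zloc :: "nat \<Rightarrow> rat \<Rightarrow> bool" where
  "Zloc q r \<longleftrightarrow> (\<exists>a b. b \<noteq> 0 \<and> \<not> int q dvd b \<and> r = of_int a / of_int b)"

lemma qeval_Zloc:
  assumes q: "prime q" and al: "\<alpha> \<in> Zpbar q" and f: "\<And>i. Zloc q (coeff f i)"
  shows "qeval q f \<alpha> \<in> Zpbar q"
proof -
  define c where "c i = padic_class q (\<lambda>_. coeff f i)" for i
  have c: "c i \<in> Zp q" for i
    using f[of i] rat_Zp[OF q] unfolding c_def Zloc_def by auto
  show ?thesis unfolding qeval_def rat_to_Qpbar_def using K[OF q al c] unfolding c_def .
qed

lemma mg_props: "s \<in> mult_gen P \<Longrightarrow> s > 0 \<and> (\<forall>p. prime p \<longrightarrow> p \<in> P \<longrightarrow> \<not> int p dvd s)"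
proof (induction rule: mult_gen.induct)
  case one
  have "\<not> int p dvd 1" if "prime p" for p
  proof -
    have "prime (int p)" using that by simp
    thus ?thesis using not_prime_unit by blast
  qed
  thus ?case by simp
next
  case (step q s)
  have "\<not> int p dvd int q * s" if p: "prime p" "p \<in> P" for p
  proof
    assume d: "int p dvd int q * s"
    have pi: "prime (int p)" using p by simp
    from d have "int p dvd int q \<or> int p dvd s" using prime_dvd_mult_iff[OF pi] by blast
    thus False
    proof
      assume "int p dvd int q"
      hence "p dvd q" by simp
      hence "p = q" using primes_dvd_imp_eq p(1) step.hyps(1) by blast
      thus False using p step.hyps(2) by simp
    next
      assume "int p dvd s" thus False using step.IH p by blast
    qed
  qed
  moreover have "int q * s > 0" using step prime_gt_0_nat by simp
  ultimately show ?case by blast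
qed

lemma mg_decomp:
  fixes D :: nat
  shows "D > 0 \<Longrightarrow> \<exists>s t. int D = s * t \<and> s \<in> mult_gen P \<and> t > 0 \<and> (\<forall>q. prime q \<longrightarrow> int q dvd t \<longrightarrow> q \<in> P)"
proof (induction D rule: less_induct)
  case (less D)
  show ?case
  proof (cases "D = 1")
    case True
    have "\<forall>q. prime q \<longrightarrow> int q dvd 1 \<longrightarrow> q \<in> P"
    proof (intro allI impI)
      fix q :: nat assume "prime q" "int q dvd 1"
      moreover have "prime (int q)" using \<open>prime q\<close> by simp
      ultimately show "q \<in> P" using not_prime_unit by blast
    qed
    thus ?thesis using True mult_gen.one by (intro exI[of _ 1]) auto
  next
    case False
    obtain q where q: "prime q" "q dvd D" using prime_factor_nat[OF False] by blast
    then obtain D' where D': "D = q * D'" by blast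
    have D'pos: "D' > 0" using less.prems D' by simp
    have "D' < D" using D' D'pos prime_gt_1_nat[OF q(1)] by simp
    then obtain s t where st: "int D' = s * t" "s \<in> mult_gen P" "t > 0"
      "\<forall>r. prime r \<longrightarrow> int r dvd t \<longrightarrow> r \<in> P"
      using less.IH D'pos by blast
    show ?thesis
    proof (cases "q \<in> P")
      case True
      have "\<forall>r. prime r \<longrightarrow> int r dvd int q * t \<longrightarrow> r \<in> P"
      proof (intro allI impI)
        fix r :: nat assume r: "prime r" "int r dvd int q * t"
        have ri: "prime (int r)" using r by simp
        from r(2) have "int r dvd int q \<or> int r dvd t" using prime_dvd_mult_iff[OF ri] by blast
        thus "r \<in> P"
        proof
          assume "int r dvd int q"
          hence "r dvd q" by simp
          hence "r = q" using primes_dvd_imp_eq r(1) q(1) by blast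
          thus "r \<in> P" using True by simp
        next
          assume "int r dvd t" thus "r \<in> P" using st(4) r(1) by blast
        qed
      qed
      moreover have "int D = s * (int q * t)" using D' st(1) by (simp add: algebra_simps)
      moreover have "int q * t > 0" using st(3) prime_gt_0_nat[OF q(1)] by simp
      ultimately show ?thesis using st(2) by blast
    next
      case False
      have "int q * s \<in> mult_gen P" using mult_gen.step[OF q(1) False st(2)] .
      moreover have "int D = (int q * s) * t" using D' st(1) by (simp add: algebra_simps)
      ultimately show ?thesis using st(3,4) by blast
    qed
  qed
qed

lemma common_den:
  fixes f :: "rat poly"
  shows "\<exists>D::nat. D > 0 \<and> (\<forall>i. of_nat D * coeff f i \<in> \<int>)"
proof -
  define den where "den i = snd (quotient_of (coeff f i))" for i
  define num where "num i = fst (quotient_of (coeff f i))" for i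
  have denpos: "den i > 0" for i unfolding den_def using quotient_of_denom_pos' .
  have cf: "coeff f i = of_int (num i) / of_int (den i)" for i
    unfolding num_def den_def using quotient_of_div[of "coeff f i"] by (cases "quotient_of (coeff f i)") auto
  define D where "D = nat (\<Prod>i\<in>{..degree f}. den i)"
  have Dprod: "int D = (\<Prod>i\<in>{..degree f}. den i)" unfolding D_def using denpos
    by (simp add: prod_pos order.strict_implies_order)
  have Dpos: "D > 0" using Dprod denpos by (metis of_nat_0_less_iff prod_pos)
  have "of_nat D * coeff f i \<in> \<int>" for i
  proof (cases "i \<le> degree f")
    case False thus ?thesis by (simp add: coeff_eq_0)
  next
    case True
    have "(\<Prod>i\<in>{..degree f}. den i) = den i * (\<Prod>j\<in>{..degree f} - {i}. den j)"
      using True by (subst prod.remove[of _ i]) auto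
    hence "(of_nat D :: rat) = of_int (den i) * of_int (\<Prod>j\<in>{..degree f} - {i}. den j)"
      using Dprod by (metis of_int_mult of_int_of_nat_eq)
    hence eq: "of_nat D * coeff f i = of_int (num i) * of_int (\<Prod>j\<in>{..degree f} - {i}. den j)"
      unfolding cf using denpos[of i] by (simp add: field_simps)
    show ?thesis unfolding eq by (intro Ints_mult Ints_of_int)
  qed
  thus ?thesis using Dpos by blast
qed

lemma sup_lemma:
  assumes E: "\<And>p. prime p \<Longrightarrow> E p \<subseteq> Zpbar p"
    and f: "\<And>p. p \<in> P \<Longrightarrow> prime p \<Longrightarrow> f \<in> IntQ p (E p)"
  shows "\<exists>s\<in>mult_gen P. smult (of_int s) f \<in> IntQ_family E"
proof -
  obtain D :: nat where D: "D > 0" "\<And>i. of_nat D * coeff f i \<in> \<int>" using common_den by blast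
  obtain s t where st: "int D = s * t" "s \<in> mult_gen P" "t > 0" "\<forall>q. prime q \<longrightarrow> int q dvd t \<longrightarrow> q \<in> P"
    using mg_decomp[OF D(1)] by blast
  have spos: "s > 0" using mg_props[OF st(2)] by simp
  have zl: "Zloc q (coeff (smult (of_int s) f) i)" if q: "prime q" "q \<notin> P" for q i
  proof -
    obtain m where m: "of_nat D * coeff f i = of_int m" using D(2)[of i] Ints_cases by metis
    have "(of_nat D :: rat) = of_int s * of_int t" using st(1) by (metis of_int_mult of_int_of_nat_eq)
    hence "of_int s * coeff f i = of_int m / of_int t" using m st(3) by (simp add: field_simps)
    moreover have "\<not> int q dvd t" using st(4) q by blast
    ultimately show ?thesis unfolding Zloc_def using st(3) by (intro exI[of _ m] exI[of _ t]) auto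
  qed
  have "smult (of_int s) f \<in> IntQ_family E"
    unfolding IntQ_family_def IntQ_def
  proof (intro CollectI allI impI ballI)
    fix q \<alpha> assume q: "prime q" and al: "\<alpha> \<in> E q"
    have alZ: "\<alpha> \<in> Zpbar q" using E[OF q] al by blast
    hence alc: "\<alpha> \<in> carrier (Qpbar q)" unfolding Zpbar_def by simp
    show "qeval q (smult (of_int s) f) \<alpha> \<in> Zpbar q"
    proof (cases "q \<in> P")
      case True
      have fq: "qeval q f \<alpha> \<in> Zpbar q" using f[OF True q] al unfolding IntQ_def by blast
      have "qeval q (smult (of_int s) f) \<alpha> = emb q (padic_class q (\<lambda>_. of_int s)) \<otimes>\<^bsub>Qpbar q\<^esub> qeval q f \<alpha>"
        using qeval_smult[OF q alc] spos unfolding rat_to_Qpbar_def by simp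
      thus ?thesis using K1[OF q fq Zp_int[OF q]] by simp
    next
      case False
      show ?thesis by (rule qeval_Zloc[OF q alZ zl[OF q False]])
    qed
  qed
  thus ?thesis using st(2) by blast
qed

lemma sub_lemma:
  assumes p: "prime p" and E: "E p \<subseteq> Zpbar p" and s: "s \<noteq> 0" "\<not> int p dvd s"
    and g: "g \<in> IntQ p (E p)"
  shows "smult (1 / of_int s) g \<in> IntQ p (E p)"
  unfolding IntQ_def
proof (intro CollectI ballI)
  fix \<alpha> assume al: "\<alpha> \<in> E p"
  hence alc: "\<alpha> \<in> carrier (Qpbar p)" using E unfolding Zpbar_def by blast
  have gq: "qeval p g \<alpha> \<in> Zpbar p" using g al unfolding IntQ_def by blast
  have "qeval p (smult (1 / of_int s) g) \<alpha> =
      emb p (padic_class p (\<lambda>_. of_int 1 / of_int s)) \<otimes>\<^bsub>Qpbar p\<^esub> qeval p g \<alpha>"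
    using qeval_smult[OF p alc, of "1 / of_int s" g] s unfolding rat_to_Qpbar_def by simp
  thus "qeval p (smult (1 / of_int s) g) \<alpha> \<in> Zpbar p"
    using K1[OF p gq rat_Zp[OF p s(1) s(2), of 1]] by simp
qed

theorem mainTheorem1:
  fixes E :: "nat \<Rightarrow> qbar set" and P :: "nat set"
  assumes "\<And>p. prime p \<Longrightarrow> E p \<subseteq> Zpbar p"
    and "finite P" and "\<forall>p\<in>P. prime p"
  shows "loc (mult_gen P) (IntQ_family E) = {f. \<forall>p\<in>P. f \<in> IntQ p (E p)} \<and>
         (\<forall>p. prime p \<longrightarrow> loc {s. \<not> int p dvd s} (IntQ_family E) = IntQ p (E p))"
proof
  show "loc (mult_gen P) (IntQ_family E) = {f. \<forall>p\<in>P. f \<in> IntQ p (E p)}"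
  proof
    show "loc (mult_gen P) (IntQ_family E) \<subseteq> {f. \<forall>p\<in>P. f \<in> IntQ p (E p)}"
    proof
      fix h assume "h \<in> loc (mult_gen P) (IntQ_family E)"
      then obtain g s where h: "h = smult (1 / of_int s) g" "g \<in> IntQ_family E" "s \<in> mult_gen P"
        unfolding loc_def by blast
      have "h \<in> IntQ p (E p)" if p: "p \<in> P" for p
      proof -
        have pp: "prime p" using assms(3) p by blast
        have "s \<noteq> 0" "\<not> int p dvd s" using mg_props[OF h(3)] pp p by auto
        moreover have "g \<in> IntQ p (E p)" using h(2) pp unfolding IntQ_family_def by blast
        ultimately show ?thesis using sub_lemma[where E=E and p=p and s=s and g=g] pp assms(1)[OF pp] h(1) by blast
      qed
      thus "h \<in> {f. \<forall>p\<in>P. f \<in> IntQ p (E p)}" by blast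
    qed
  next
    show "{f. \<forall>p\<in>P. f \<in> IntQ p (E p)} \<subseteq> loc (mult_gen P) (IntQ_family E)"
    proof
      fix f assume "f \<in> {f. \<forall>p\<in>P. f \<in> IntQ p (E p)}"
      hence f: "\<And>p. p \<in> P \<Longrightarrow> prime p \<Longrightarrow> f \<in> IntQ p (E p)" by blast
      obtain s where s: "s \<in> mult_gen P" "smult (of_int s) f \<in> IntQ_family E"
        using sup_lemma[OF assms(1) f] by blast
      have "s \<noteq> 0" using mg_props[OF s(1)] by simp
      hence "f = smult (1 / of_int s) (smult (of_int s) f)" by simp
      thus "f \<in> loc (mult_gen P) (IntQ_family E)" unfolding loc_def using s by blast
    qed
  qed
next
  show "\<forall>p. prime p \<longrightarrow> loc {s. \<not> int p dvd s} (IntQ_family E) = IntQ p (E p)"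
  proof (intro allI impI)
    fix p :: nat assume pp: "prime p"
    show "loc {s. \<not> int p dvd s} (IntQ_family E) = IntQ p (E p)"
    proof
      show "loc {s. \<not> int p dvd s} (IntQ_family E) \<subseteq> IntQ p (E p)"
      proof
        fix h assume "h \<in> loc {s. \<not> int p dvd s} (IntQ_family E)"
        then obtain g s where h: "h = smult (1 / of_int s) g" "g \<in> IntQ_family E" "\<not> int p dvd s"
          unfolding loc_def by blast
        have "s \<noteq> 0" using h(3) by auto
        moreover have "g \<in> IntQ p (E p)" using h(2) pp unfolding IntQ_family_def by blast
        ultimately show "h \<in> IntQ p (E p)" using sub_lemma[where E=E and p=p and s=s and g=g] pp assms(1)[OF pp] h by blast
      qed
    next
      show "IntQ p (E p) \<subseteq> loc {s. \<not> int p dvd s} (IntQ_family E)"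
      proof
        fix f assume f0: "f \<in> IntQ p (E p)"
        hence f: "\<And>q. q \<in> {p} \<Longrightarrow> prime q \<Longrightarrow> f \<in> IntQ q (E q)" by blast
        obtain s where s: "s \<in> mult_gen {p}" "smult (of_int s) f \<in> IntQ_family E"
          using sup_lemma[OF assms(1) f] by blast
        have s0: "s \<noteq> 0" "\<not> int p dvd s" using mg_props[OF s(1)] pp by auto
        hence "f = smult (1 / of_int s) (smult (of_int s) f)" by simp
        thus "f \<in> loc {s. \<not> int p dvd s} (IntQ_family E)" unfolding loc_def using s s0 by blast
      qed
    qed
  qed
qed


end
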